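(* Let $k$ be a field of characteristic $\neq2$, $f\in k[X]$ separable of degree $6$, $A=k[X]/(f)$, $\delta\in A^*$, and let $\Lambda$ be the set of $32$ lines $L_\varepsilon$ on $V_{f,\delta}\otimes\bar k$. Let $\Lambda_1,\Lambda_2$ be the two maximal subsets of $\Lambda$ consisting of lines of the same parity. Then $k(\Lambda_1)=k(\Lambda_2)=k\big(\sqrt{N(\delta)}\big)$, where $N=N_{A/k}$ is the norm from $A$ to $k$.
   Context: $V_{f,\delta}=\{[q]\in\mathbb{P}(A):\delta q^2\in\mathrm{span}(1,X,X^2)\}$. For $\varepsilon\in A\otimes\bar k$ with $\varepsilon^2=\delta$, $L_\varepsilon$ is the line corresponding to the subspace $\{\varepsilon^{-1}(sX+t)\}$. Let $\Omega$ be the roots of $f$ and $\varphi_\theta$ evaluation at $X=\theta$. Two lines $L_\varepsilon,L_{\varepsilon'}$ have the same parity if the number of $\theta\in\Omega$ with $\varphi_\theta(\varepsilon'/\varepsilon)=-1$ is even; this is independent of the signs of $\varepsilon,\varepsilon'$ since $\#\Omega=6$. For a set $Y$ acted on by $G(\bar k/k)$, $k(Y)$ is the smallest subfield $k'\supseteq k$ of $\bar k$ such that every $\sigma\in G(\bar k/k')$ maps $Y$ to itself. *)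

theory Defs
  imports "HOL-Computational_Algebra.Polynomial"
begin

text \<open>Throughout, the ambient type 'a plays the role of the algebraic closure of k;
 k is a subfield (a subset of 'a).  Elements of A = k[X]/(f) and of A \<otimes> kbar = kbar[X]/(f)
 are represented by polynomials, taken modulo f.\<close>

definition sub_field :: "'a::field set \<Rightarrow> bool" where
  "sub_field F \<longleftrightarrow> 0 \<in> F \<and> 1 \<in> F \<and> (\<forall>x\<in>F. \<forall>y\<in>F. x + y \<in> F \<and> x * y \<in> F)
     \<and> (\<forall>x\<in>F. - x \<in> F) \<and> (\<forall>x\<in>F. x \<noteq> 0 \<longrightarrow> inverse x \<in> F)"

definition alg_closed :: "'a::field itself \<Rightarrow> bool" where
  "alg_closed _ \<longleftrightarrow> (\<forall>p::'a poly. degree p \<ge> 1 \<longrightarrow> (\<exists>x. poly p x = 0))"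

definition algebraic_over :: "'a::field set \<Rightarrow> 'a \<Rightarrow> bool" where
  "algebraic_over k x \<longleftrightarrow> (\<exists>p. p \<noteq> 0 \<and> (\<forall>i. coeff p i \<in> k) \<and> poly p x = 0)"

definition is_alg_closure_of :: "'a::field set \<Rightarrow> bool" where
  "is_alg_closure_of k \<longleftrightarrow> sub_field k \<and> alg_closed TYPE('a) \<and> (\<forall>x. algebraic_over k x)"

definition field_aut :: "('a::field \<Rightarrow> 'a) \<Rightarrow> bool" where
  "field_aut \<sigma> \<longleftrightarrow> bij \<sigma> \<and> \<sigma> 1 = 1 \<and> (\<forall>x y. \<sigma> (x + y) = \<sigma> x + \<sigma> y \<and> \<sigma> (x * y) = \<sigma> x * \<sigma> y)"

definition Gal :: "'a::field set \<Rightarrow> ('a \<Rightarrow> 'a) set" where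
  "Gal k' = {\<sigma>. field_aut \<sigma> \<and> (\<forall>x\<in>k'. \<sigma> x = x)}"

definition adjoin :: "'a::field set \<Rightarrow> 'a \<Rightarrow> 'a set" where
  "adjoin k r = \<Inter> {F. sub_field F \<and> k \<subseteq> F \<and> r \<in> F}"

definition act_line :: "('a::field \<Rightarrow> 'a) \<Rightarrow> 'a poly set \<Rightarrow> 'a poly set" where
  "act_line \<sigma> L = map_poly \<sigma> ` L"

definition act_lines :: "('a::field \<Rightarrow> 'a) \<Rightarrow> 'a poly set set \<Rightarrow> 'a poly set set" where
  "act_lines \<sigma> Y = act_line \<sigma> ` Y"

definition is_field_of_def :: "'a::field set \<Rightarrow> 'a poly set set \<Rightarrow> 'a set \<Rightarrow> bool" where
  "is_field_of_def k Y F \<longleftrightarrow>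
     sub_field F \<and> k \<subseteq> F \<and> (\<forall>\<sigma>\<in>Gal F. act_lines \<sigma> Y = Y) \<and>
     (\<forall>k'. sub_field k' \<and> k \<subseteq> k' \<and> (\<forall>\<sigma>\<in>Gal k'. act_lines \<sigma> Y = Y) \<longrightarrow> F \<subseteq> k')"

text \<open>L_\<epsilon> = {\<epsilon>^-1 (sX + t) : s,t in kbar}, as a subspace of kbar[X]/(f) (reduced representatives).\<close>
definition line_of :: "'a::field poly \<Rightarrow> 'a poly \<Rightarrow> 'a poly set" where
  "line_of f \<epsilon> = {p. \<exists>u s t. (u * \<epsilon>) mod f = 1 \<and> p = (u * [:t, s:]) mod f}"

definition is_sqrt_mod :: "'a::field poly \<Rightarrow> 'a poly \<Rightarrow> 'a poly \<Rightarrow> bool" where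
  "is_sqrt_mod f \<delta> \<epsilon> \<longleftrightarrow> (\<epsilon> * \<epsilon>) mod f = \<delta> mod f"

definition lines :: "'a::field poly \<Rightarrow> 'a poly \<Rightarrow> 'a poly set set" where
  "lines f \<delta> = {line_of f \<epsilon> | \<epsilon>. is_sqrt_mod f \<delta> \<epsilon>}"

definition same_parity :: "'a::field poly \<Rightarrow> 'a poly \<Rightarrow> 'a poly set \<Rightarrow> 'a poly set \<Rightarrow> bool" where
  "same_parity f \<delta> L L' \<longleftrightarrow> (\<exists>\<epsilon> \<epsilon>'. is_sqrt_mod f \<delta> \<epsilon> \<and> is_sqrt_mod f \<delta> \<epsilon>' \<and>
      L = line_of f \<epsilon> \<and> L' = line_of f \<epsilon>' \<and>
      even (card {\<theta>. poly f \<theta> = 0 \<and> poly \<epsilon>' \<theta> / poly \<epsilon> \<theta> = -1}))"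

definition max_same_parity :: "'a::field poly \<Rightarrow> 'a poly \<Rightarrow> 'a poly set set \<Rightarrow> bool" where
  "max_same_parity f \<delta> M \<longleftrightarrow>
     (let P = (\<lambda>S. S \<subseteq> lines f \<delta> \<and> (\<forall>L\<in>S. \<forall>L'\<in>S. same_parity f \<delta> L L'))
      in P M \<and> (\<forall>S. P S \<and> M \<subseteq> S \<longrightarrow> S = M))"

definition norm_A :: "'a::field poly \<Rightarrow> 'a poly \<Rightarrow> 'a" where
  "norm_A f \<delta> = (\<Prod>\<theta>\<in>{\<theta>. poly f \<theta> = 0}. poly \<delta> \<theta>)"

end

theory Submission
  imports Defs
begin


lemma sf_0: "sub_field F \<Longrightarrow> 0 \<in> F" by (simp add: sub_field_def)
lemma sf_1: "sub_field F \<Longrightarrow> 1 \<in> F" by (simp add: sub_field_def)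
lemma sf_add: "sub_field F \<Longrightarrow> x \<in> F \<Longrightarrow> y \<in> F \<Longrightarrow> x + y \<in> F" by (simp add: sub_field_def)
lemma sf_mult: "sub_field F \<Longrightarrow> x \<in> F \<Longrightarrow> y \<in> F \<Longrightarrow> x * y \<in> F" by (simp add: sub_field_def)
lemma sf_uminus: "sub_field F \<Longrightarrow> x \<in> F \<Longrightarrow> - x \<in> F" by (simp add: sub_field_def)
lemma sf_inverse: "sub_field F \<Longrightarrow> x \<in> F \<Longrightarrow> inverse x \<in> F"
  by (cases "x = 0") (auto simp add: sub_field_def)
lemma sf_diff: "sub_field F \<Longrightarrow> x \<in> F \<Longrightarrow> y \<in> F \<Longrightarrow> x - y \<in> F"
  using sf_add sf_uminus by (metis diff_conv_add_uminus)
lemma sf_divide: "sub_field F \<Longrightarrow> x \<in> F \<Longrightarrow> y \<in> F \<Longrightarrow> x / y \<in> F"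
  using sf_mult sf_inverse by (metis divide_inverse)
lemma sf_power: "sub_field F \<Longrightarrow> x \<in> F \<Longrightarrow> x ^ n \<in> F"
  by (induction n) (auto intro: sf_1 sf_mult)
lemma sf_prod: "sub_field F \<Longrightarrow> (\<And>x. x \<in> S \<Longrightarrow> g x \<in> F) \<Longrightarrow> prod g S \<in> F"
  by (induction S rule: infinite_finite_induct) (auto intro: sf_1 sf_mult)
lemma sf_sum: "sub_field F \<Longrightarrow> (\<And>x. x \<in> S \<Longrightarrow> g x \<in> F) \<Longrightarrow> sum g S \<in> F"
  by (induction S rule: infinite_finite_induct) (auto intro: sf_0 sf_add)

definition PF :: "'a::field set \<Rightarrow> 'a poly set" where
  "PF F = {p. \<forall>i. coeff p i \<in> F}"

lemma PF_iff: "p \<in> PF F \<longleftrightarrow> (\<forall>i. coeff p i \<in> F)" by (simp add: PF_def)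

lemma PF_0: "sub_field F \<Longrightarrow> 0 \<in> PF F" by (simp add: PF_def sf_0)
lemma PF_pCons: "sub_field F \<Longrightarrow> a \<in> F \<Longrightarrow> p \<in> PF F \<Longrightarrow> pCons a p \<in> PF F"
  by (auto simp: PF_def coeff_pCons split: nat.splits)
lemma PF_pCons_iff: "sub_field F \<Longrightarrow> pCons a p \<in> PF F \<longleftrightarrow> a \<in> F \<and> p \<in> PF F"
  by (auto simp: PF_def coeff_pCons split: nat.splits)
lemma PF_const: "sub_field F \<Longrightarrow> a \<in> F \<Longrightarrow> [:a:] \<in> PF F"
  by (simp add: PF_pCons PF_0)
lemma PF_add: "sub_field F \<Longrightarrow> p \<in> PF F \<Longrightarrow> q \<in> PF F \<Longrightarrow> p + q \<in> PF F"
  by (simp add: PF_def sf_add)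
lemma PF_uminus: "sub_field F \<Longrightarrow> p \<in> PF F \<Longrightarrow> - p \<in> PF F"
  by (simp add: PF_def sf_uminus)
lemma PF_diff: "sub_field F \<Longrightarrow> p \<in> PF F \<Longrightarrow> q \<in> PF F \<Longrightarrow> p - q \<in> PF F"
  by (simp add: PF_def sf_diff)
lemma PF_smult: "sub_field F \<Longrightarrow> a \<in> F \<Longrightarrow> p \<in> PF F \<Longrightarrow> smult a p \<in> PF F"
  by (simp add: PF_def sf_mult)
lemma PF_mult: "sub_field F \<Longrightarrow> p \<in> PF F \<Longrightarrow> q \<in> PF F \<Longrightarrow> p * q \<in> PF F"
proof (induction p)
  case 0 then show ?case by (simp add: PF_0)
next
  case (pCons a p)
  then show ?case
    by (simp add: PF_pCons_iff PF_add PF_smult PF_pCons sf_0)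
qed
lemma PF_monom: "sub_field F \<Longrightarrow> a \<in> F \<Longrightarrow> monom a n \<in> PF F"
  by (simp add: PF_def coeff_monom sf_0)
lemma PF_pcompose: "sub_field F \<Longrightarrow> p \<in> PF F \<Longrightarrow> q \<in> PF F \<Longrightarrow> pcompose p q \<in> PF F"
proof (induction p)
  case 0 then show ?case by (simp add: PF_0)
next
  case (pCons a p)
  then show ?case
    by (auto intro!: PF_add PF_const PF_mult simp: pcompose_pCons PF_pCons_iff)
qed
lemma PF_poly: "sub_field F \<Longrightarrow> p \<in> PF F \<Longrightarrow> x \<in> F \<Longrightarrow> poly p x \<in> F"
proof (induction p)
  case 0 then show ?case by (simp add: sf_0)
next
  case (pCons a p)
  then show ?case by (simp add: PF_pCons_iff sf_add sf_mult)
qed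
lemma PF_mono: "F \<subseteq> G \<Longrightarrow> p \<in> PF F \<Longrightarrow> p \<in> PF G"
  by (auto simp: PF_def)

definition phom :: "'a::field set \<Rightarrow> ('a \<Rightarrow> 'a) \<Rightarrow> bool" where
  "phom F \<phi> \<longleftrightarrow> \<phi> 0 = 0 \<and> \<phi> 1 = 1 \<and>
     (\<forall>x\<in>F. \<forall>y\<in>F. \<phi> (x + y) = \<phi> x + \<phi> y \<and> \<phi> (x * y) = \<phi> x * \<phi> y)"

lemma phom_0: "phom F \<phi> \<Longrightarrow> \<phi> 0 = 0" by (simp add: phom_def)
lemma phom_1: "phom F \<phi> \<Longrightarrow> \<phi> 1 = 1" by (simp add: phom_def)
lemma phom_add: "phom F \<phi> \<Longrightarrow> x \<in> F \<Longrightarrow> y \<in> F \<Longrightarrow> \<phi> (x + y) = \<phi> x + \<phi> y"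
  by (simp add: phom_def)
lemma phom_mult: "phom F \<phi> \<Longrightarrow> x \<in> F \<Longrightarrow> y \<in> F \<Longrightarrow> \<phi> (x * y) = \<phi> x * \<phi> y"
  by (simp add: phom_def)
lemma phom_uminus: "sub_field F \<Longrightarrow> phom F \<phi> \<Longrightarrow> x \<in> F \<Longrightarrow> \<phi> (- x) = - \<phi> x"
  using phom_add[of F \<phi> x "-x"] phom_0[of F \<phi>] sf_uminus[of F x]
  by (simp add: eq_neg_iff_add_eq_0 add.commute)
lemma phom_diff: "sub_field F \<Longrightarrow> phom F \<phi> \<Longrightarrow> x \<in> F \<Longrightarrow> y \<in> F \<Longrightarrow> \<phi> (x - y) = \<phi> x - \<phi> y"
proof -
  assume a: "sub_field F" "phom F \<phi>" "x \<in> F" "y \<in> F"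
  have "\<phi> (x - y) = \<phi> (x + - y)" by simp
  also have "\<dots> = \<phi> x + \<phi> (- y)" using phom_add[OF a(2) a(3) sf_uminus[OF a(1) a(4)]] by simp
  also have "\<dots> = \<phi> x - \<phi> y" using a by (simp add: phom_uminus)
  finally show ?thesis .
qed
lemma phom_nz: "sub_field F \<Longrightarrow> phom F \<phi> \<Longrightarrow> x \<in> F \<Longrightarrow> x \<noteq> 0 \<Longrightarrow> \<phi> x \<noteq> 0"
proof
  assume a: "sub_field F" "phom F \<phi>" "x \<in> F" "x \<noteq> 0" "\<phi> x = 0"
  have "\<phi> x * \<phi> (inverse x) = \<phi> (x * inverse x)"
    using phom_mult[OF a(2) a(3) sf_inverse[OF a(1) a(3)]] by argo
  also have "\<dots> = 1" using a phom_1[OF a(2)] by simp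
  finally show False using a by simp
qed
lemma phom_inj: "sub_field F \<Longrightarrow> phom F \<phi> \<Longrightarrow> inj_on \<phi> F"
proof (rule inj_onI)
  fix x y assume a: "sub_field F" "phom F \<phi>" "x \<in> F" "y \<in> F" "\<phi> x = \<phi> y"
  then have "\<phi> (x - y) = 0" by (simp add: phom_diff)
  then have "x - y = 0" using a phom_nz[of F \<phi> "x - y"] sf_diff by blast
  then show "x = y" by simp
qed
lemma phom_power: "sub_field F \<Longrightarrow> phom F \<phi> \<Longrightarrow> x \<in> F \<Longrightarrow> \<phi> (x ^ n) = \<phi> x ^ n"
  by (induction n) (auto simp: phom_1 phom_mult sf_power)
lemma phom_prod: "sub_field F \<Longrightarrow> phom F \<phi> \<Longrightarrow> (\<And>x. x \<in> S \<Longrightarrow> g x \<in> F) \<Longrightarrow>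
   \<phi> (prod g S) = (\<Prod>x\<in>S. \<phi> (g x))"
  by (induction S rule: infinite_finite_induct) (auto simp: phom_1 phom_mult sf_prod)
lemma phom_inverse: "sub_field F \<Longrightarrow> phom F \<phi> \<Longrightarrow> x \<in> F \<Longrightarrow> \<phi> (inverse x) = inverse (\<phi> x)"
proof -
  assume a: "sub_field F" "phom F \<phi>" "x \<in> F"
  show ?thesis
  proof (cases "x = 0")
    case True then show ?thesis using a by (simp add: phom_0)
  next
    case False
    have "1 = \<phi> (x * inverse x)" using a False by (simp add: phom_1)
    also have "\<dots> = \<phi> x * \<phi> (inverse x)" using a by (simp add: phom_mult sf_inverse)
    finally have "\<phi> x * \<phi> (inverse x) = 1" by simp
    then show ?thesis by (metis inverse_unique)
  qed
qed
lemma phom_divide: "sub_field F \<Longrightarrow> phom F \<phi> \<Longrightarrow> x \<in> F \<Longrightarrow> y \<in> F \<Longrightarrow> \<phi> (x / y) = \<phi> x / \<phi> y"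
  by (simp add: divide_inverse phom_mult phom_inverse sf_inverse)

lemma coeff_map_phom: "phom F \<phi> \<Longrightarrow> coeff (map_poly \<phi> p) i = \<phi> (coeff p i)"
  by (simp add: coeff_map_poly phom_0)

lemma map_phom_add: "sub_field F \<Longrightarrow> phom F \<phi> \<Longrightarrow> p \<in> PF F \<Longrightarrow> q \<in> PF F \<Longrightarrow>
  map_poly \<phi> (p + q) = map_poly \<phi> p + map_poly \<phi> q"
  by (rule poly_eqI) (simp add: coeff_map_phom PF_def phom_add)
lemma map_phom_diff: "sub_field F \<Longrightarrow> phom F \<phi> \<Longrightarrow> p \<in> PF F \<Longrightarrow> q \<in> PF F \<Longrightarrow>
  map_poly \<phi> (p - q) = map_poly \<phi> p - map_poly \<phi> q"
  by (rule poly_eqI) (simp add: coeff_map_phom PF_def phom_diff)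
lemma map_phom_smult: "sub_field F \<Longrightarrow> phom F \<phi> \<Longrightarrow> a \<in> F \<Longrightarrow> p \<in> PF F \<Longrightarrow>
  map_poly \<phi> (smult a p) = smult (\<phi> a) (map_poly \<phi> p)"
  by (rule poly_eqI) (simp add: coeff_map_phom PF_def phom_mult)
lemma map_phom_monom_mult: "phom F \<phi> \<Longrightarrow> map_poly \<phi> (monom 1 n * p) = monom 1 n * map_poly \<phi> p"
  by (rule poly_eqI) (simp add: coeff_map_phom coeff_monom_mult phom_0)
lemma map_phom_const: "phom F \<phi> \<Longrightarrow> map_poly \<phi> [:a:] = [:\<phi> a:]"
proof -
  assume "phom F \<phi>" then have "\<phi> 0 = 0" by (rule phom_0)
  then show ?thesis by (simp add: map_poly_pCons)
qed
lemma map_phom_mult: "sub_field F \<Longrightarrow> phom F \<phi> \<Longrightarrow> p \<in> PF F \<Longrightarrow> q \<in> PF F \<Longrightarrow>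
  map_poly \<phi> (p * q) = map_poly \<phi> p * map_poly \<phi> q"
proof (induction p)
  case 0 then show ?case by simp
next
  case (pCons a p)
  have z: "\<phi> 0 = 0" using pCons phom_0 by blast
  have a: "a \<in> F" and p: "p \<in> PF F" using pCons.prems PF_pCons_iff by blast+
  have "map_poly \<phi> (pCons a p * q) = map_poly \<phi> (smult a q + pCons 0 (p * q))" by simp
  also have "\<dots> = smult (\<phi> a) (map_poly \<phi> q) + pCons 0 (map_poly \<phi> p * map_poly \<phi> q)"
    using pCons a p
    by (simp add: map_phom_add PF_smult PF_pCons PF_mult sf_0 map_phom_smult z map_poly_pCons)
  also have "\<dots> = map_poly \<phi> (pCons a p) * map_poly \<phi> q"
    by (simp add: map_poly_pCons z)
  finally show ?case .
qed
lemma poly_map_phom: "sub_field F \<Longrightarrow> phom F \<phi> \<Longrightarrow> p \<in> PF F \<Longrightarrow> x \<in> F \<Longrightarrow>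
  poly (map_poly \<phi> p) (\<phi> x) = \<phi> (poly p x)"
proof (induction p)
  case 0 then show ?case by (simp add: phom_0)
next
  case (pCons a p)
  then have a: "a \<in> F" and p: "p \<in> PF F" using PF_pCons_iff by blast+
  have z: "\<phi> 0 = 0" using pCons phom_0 by blast
  have "poly (map_poly \<phi> (pCons a p)) (\<phi> x) = \<phi> a + \<phi> x * poly (map_poly \<phi> p) (\<phi> x)"
    by (simp add: map_poly_pCons z)
  also have "\<dots> = \<phi> a + \<phi> x * \<phi> (poly p x)" using pCons p by simp
  also have "\<dots> = \<phi> (a + x * poly p x)" using pCons a p
    by (simp add: phom_add phom_mult PF_poly sf_mult)
  finally show ?case by simp
qed



lemma vanish_dvd:
  fixes q :: "'a::field poly"
  assumes "finite S" "\<forall>x\<in>S. poly q x = 0"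
  shows "(\<Prod>x\<in>S. [:-x,1:]) dvd q"
  using assms
proof (induction S arbitrary: q rule: finite_induct)
  case empty then show ?case by simp
next
  case (insert a S)
  have "poly q a = 0" using insert by simp
  then obtain q1 where q1: "q = [:-a,1:] * q1" using dvd_iff_poly_eq_0[of "-a" q] by auto
  have "\<forall>x\<in>S. poly q1 x = 0"
  proof
    fix x assume x: "x \<in> S"
    then have "x \<noteq> a" using insert by auto
    moreover have "poly q x = 0" using insert x by simp
    ultimately show "poly q1 x = 0" using q1 by simp
  qed
  then have "(\<Prod>x\<in>S. [:-x,1:]) dvd q1" using insert by blast
  then have "[:-a,1:] * (\<Prod>x\<in>S. [:-x,1:]) dvd [:-a,1:] * q1" by (rule mult_dvd_mono[OF dvd_refl])
  then show ?case using insert q1 by simp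
qed

lemma alg_closed_root: "alg_closed TYPE('a::field) \<Longrightarrow> degree (p::'a poly) \<ge> 1 \<Longrightarrow> \<exists>x. poly p x = 0"
  by (simp add: alg_closed_def)

lemma poly_linear_prod_list: "poly (\<Prod>a\<leftarrow>xs. [:-a,1:]) (x::'a::field) = (\<Prod>a\<leftarrow>xs. x - a)"
proof (induction xs)
  case Nil then show ?case by simp
next
  case (Cons a xs)
  have "poly (\<Prod>b\<leftarrow>a#xs. [:-b,1:]) x = poly [:-a,1:] x * poly (\<Prod>b\<leftarrow>xs. [:-b,1:]) x"
    by (simp only: list.map prod_list.Cons poly_mult)
  also have "poly [:-a,1:] x = x - a" by (simp add: algebra_simps)
  finally show ?case using Cons by simp
qed

lemma split_list:
  fixes p :: "'a::field poly"
  assumes ac: "alg_closed TYPE('a)" and "p \<noteq> 0"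
  shows "\<exists>xs. length xs = degree p \<and> p = smult (lead_coeff p) (\<Prod>a\<leftarrow>xs. [:-a,1:])"
  using assms(2)
proof (induction "degree p" arbitrary: p rule: less_induct)
  case less
  show ?case
  proof (cases "degree p = 0")
    case True
    then have "p = [:lead_coeff p:]"
      by (metis degree_eq_zeroE lead_coeff_pCons(2) pCons_0_0)
    then show ?thesis using True by (intro exI[of _ "[]"]) simp
  next
    case False
    then obtain a where a: "poly p a = 0" using alg_closed_root[OF ac, of p] by auto
    then obtain q where q: "p = [:-a,1:] * q" using dvd_iff_poly_eq_0[of "-a" p] by auto
    have qnz: "q \<noteq> 0" using q less.prems by auto
    have "degree ([:-a,1:] * q) = degree [:-a,1:] + degree q" by (rule degree_mult_eq) (use qnz in auto)
    with q have dq: "degree p = degree q + 1" by simp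
    have lq: "lead_coeff p = lead_coeff q" unfolding q lead_coeff_mult by simp
    obtain ys where ys: "length ys = degree q" "q = smult (lead_coeff q) (\<Prod>a\<leftarrow>ys. [:-a,1:])"
      using less.hyps[of q] dq qnz by auto
    have h: "p = smult (lead_coeff q) ([:-a,1:] * (\<Prod>b\<leftarrow>ys. [:-b,1:]))"
      by (subst q, subst ys(2), simp only: mult_smult_right)
    have len: "length (a#ys) = degree p" using dq ys(1) by simp
    have h2: "p = smult (lead_coeff p) ([:-a,1:] * (\<Prod>b\<leftarrow>ys. [:-b,1:]))"
      by (subst lq) (rule h)
    have "p = smult (lead_coeff p) (\<Prod>b\<leftarrow>a#ys. [:-b,1:])"
      unfolding list.map prod_list.Cons by (rule h2)
    with len show ?thesis by blast
  qed
qed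

lemma prod_list_mult_distrib: "(\<Prod>x\<leftarrow>ys. f x * g x) = (\<Prod>x\<leftarrow>ys. f x) * (\<Prod>x\<leftarrow>ys. (g x :: 'a::comm_monoid_mult))"
  by (induction ys) (auto simp: ac_simps)

lemma prod_list_const: "(\<Prod>x\<leftarrow>ys. c) = c ^ length ys"
  by (induction ys) auto

lemma prod_list_swap: "(\<Prod>a\<leftarrow>xs. \<Prod>b\<leftarrow>ys. h a b) = (\<Prod>b\<leftarrow>ys. \<Prod>a\<leftarrow>xs. (h a b :: 'a::comm_monoid_mult))"
  by (induction xs) (auto simp: prod_list_mult_distrib prod_list_const)

lemma swap_res:
  fixes cp cg :: "'a::field"
  assumes "p = smult cp (\<Prod>a\<leftarrow>xs. [:-a,1:])" "g = smult cg (\<Prod>a\<leftarrow>ys. [:-a,1:])"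
  shows "cp ^ length ys * (\<Prod>a\<leftarrow>xs. poly g a) =
         (-1) ^ (length xs * length ys) * (cg ^ length xs * (\<Prod>b\<leftarrow>ys. poly p b))"
proof -
  have "(\<Prod>a\<leftarrow>xs. poly g a) = (\<Prod>a\<leftarrow>xs. cg * (\<Prod>b\<leftarrow>ys. a - b))"
    using assms by (simp add: poly_linear_prod_list)
  also have "\<dots> = cg ^ length xs * (\<Prod>a\<leftarrow>xs. \<Prod>b\<leftarrow>ys. a - b)"
    by (simp add: prod_list_mult_distrib prod_list_const)
  finally have 1: "(\<Prod>a\<leftarrow>xs. poly g a) = cg ^ length xs * (\<Prod>a\<leftarrow>xs. \<Prod>b\<leftarrow>ys. a - b)" .
  have "(\<Prod>b\<leftarrow>ys. poly p b) = (\<Prod>b\<leftarrow>ys. cp * (\<Prod>a\<leftarrow>xs. b - a))"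
    using assms by (simp add: poly_linear_prod_list)
  also have "\<dots> = cp ^ length ys * (\<Prod>b\<leftarrow>ys. \<Prod>a\<leftarrow>xs. b - a)"
    by (simp add: prod_list_mult_distrib prod_list_const)
  also have "(\<Prod>b\<leftarrow>ys. \<Prod>a\<leftarrow>xs. b - a) = (\<Prod>b\<leftarrow>ys. \<Prod>a\<leftarrow>xs. (-1) * (a - b))"
    by simp
  also have "\<dots> = (\<Prod>b\<leftarrow>ys. (-1) ^ length xs * (\<Prod>a\<leftarrow>xs. (a - b)))"
    by (simp only: prod_list_mult_distrib prod_list_const)
  also have "\<dots> = (-1) ^ (length xs * length ys) * (\<Prod>b\<leftarrow>ys. \<Prod>a\<leftarrow>xs. (a - b))"
    by (simp only: prod_list_mult_distrib prod_list_const power_mult)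
  also have "(\<Prod>b\<leftarrow>ys. \<Prod>a\<leftarrow>xs. (a - b)) = (\<Prod>a\<leftarrow>xs. \<Prod>b\<leftarrow>ys. a - b)"
    by (rule prod_list_swap[symmetric])
  finally have 2: "(\<Prod>b\<leftarrow>ys. poly p b) = cp ^ length ys * ((-1) ^ (length xs * length ys) * (\<Prod>a\<leftarrow>xs. \<Prod>b\<leftarrow>ys. a - b))" .
  have m: "(-1::'a) ^ (length xs * length ys) * (-1) ^ (length xs * length ys) = 1"
    by (simp add: power_mult_distrib[symmetric])
  show ?thesis unfolding 1 2
    by (simp add: algebra_simps m)
qed



lemma prod_list_decomp2:
  "prod_list (map (g::'b \<Rightarrow> 'c::comm_monoid_mult) (as @ [y] @ bs @ [y] @ cs)) =
    g y ^ 2 * (prod_list (map g as) * prod_list (map g bs) * prod_list (map g cs))"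
  by (simp add: power2_eq_square ac_simps)

lemma sep_split:
  fixes f :: "'a::field poly"
  assumes ac: "alg_closed TYPE('a)" and sf: "rsquarefree f"
  shows "\<exists>xs. distinct xs \<and> set xs = {x. poly f x = 0} \<and> length xs = degree f \<and>
           f = smult (lead_coeff f) (\<Prod>a\<leftarrow>xs. [:-a,1:])"
proof -
  have fnz: "f \<noteq> 0" using sf by (simp add: rsquarefree_def)
  obtain xs where xs: "length xs = degree f" "f = smult (lead_coeff f) (\<Prod>a\<leftarrow>xs. [:-a,1:])"
    using split_list[OF ac fnz] by blast
  have lnz: "lead_coeff f \<noteq> 0" using fnz by simp
  have pf: "poly f x = lead_coeff f * (\<Prod>a\<leftarrow>xs. x - a)" for x
    by (subst xs(2)) (simp add: poly_linear_prod_list)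
  have set: "set xs = {x. poly f x = 0}"
  proof -
    have "poly f x = 0 \<longleftrightarrow> x \<in> set xs" for x
      using lnz by (force simp add: pf prod_list_zero_iff)
    then show ?thesis by auto
  qed
  have dist: "distinct xs"
  proof (rule ccontr)
    assume "\<not> distinct xs"
    then obtain as y bs cs where d: "xs = as @ [y] @ bs @ [y] @ cs"
      using not_distinct_decomp by blast
    have "(\<Prod>a\<leftarrow>xs. [:-a,1:]) = [:-y,1:]^2 * ((\<Prod>a\<leftarrow>as. [:-a,1:]) * (\<Prod>a\<leftarrow>bs. [:-a,1:]) * (\<Prod>a\<leftarrow>cs. [:-a,1:]))"
      unfolding d by (rule prod_list_decomp2)
    then have "[:-y,1:]^2 dvd (\<Prod>a\<leftarrow>xs. [:-a,1:])" by simp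
    then have "[:-y,1:]^2 dvd f" by (subst xs(2)) (rule dvd_smult)
    then have "2 \<le> order y f" using fnz order_divides by blast
    then show False using sf by (auto simp: rsquarefree_def dest: spec[of _ y])
  qed
  show ?thesis using dist set xs by blast
qed

lemma card_roots_sep:
  fixes f :: "'a::field poly"
  assumes ac: "alg_closed TYPE('a)" and sf: "rsquarefree f"
  shows "card {x. poly f x = 0} = degree f"
  using sep_split[OF ac sf] distinct_card by metis

lemma interpolate:
  fixes v :: "'a::field \<Rightarrow> 'a"
  assumes "finite S"
  shows "\<exists>p. \<forall>x\<in>S. poly p x = v x"
  using assms
proof (induction S rule: finite_induct)
  case empty then show ?case by simp
next
  case (insert a S)
  then obtain p where p: "\<forall>x\<in>S. poly p x = v x" by blast
  define w where "w = (\<Prod>b\<in>S. [:-b,1:])"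
  have w0: "poly w x = 0" if "x \<in> S" for x
    unfolding w_def poly_prod using insert that by (auto intro: prod_zero)
  have wa: "poly w a \<noteq> 0"
    unfolding w_def poly_prod using insert by auto
  define c where "c = (v a - poly p a) / poly w a"
  have "\<forall>x\<in>insert a S. poly (p + smult c w) x = v x"
    using p w0 wa by (auto simp: c_def)
  then show ?case by blast
qed

lemma PF_mod:
  fixes g p :: "'a::field poly"
  assumes F: "sub_field F" and p: "p \<in> PF F" "p \<noteq> 0" and g: "g \<in> PF F"
  shows "g mod p \<in> PF F"
  using g
proof (induction "degree g" arbitrary: g rule: less_induct)
  case less
  show ?case
  proof (cases "degree g < degree p")
    case True
    then show ?thesis using less by (simp add: mod_poly_less)
  next
    case False
    define d where "d = degree g - degree p"
    define c where "c = lead_coeff g / lead_coeff p"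
    define g' where "g' = g - smult c (monom 1 d * p)"
    have cF: "c \<in> F" unfolding c_def using less.prems p F by (simp add: PF_iff sf_divide)
    have g'F: "g' \<in> PF F" unfolding g'_def
      using less.prems p F cF by (intro PF_diff PF_smult PF_mult PF_monom sf_1) auto
    have "g' mod p = g mod p"
      unfolding g'_def mod_eq_dvd_iff by (simp add: dvd_smult)
    have lp: "lead_coeff p \<noteq> 0" using p by simp
    have coeff0: "coeff g' i = 0" if "i \<ge> degree g" for i
    proof (cases "i = degree g")
      case True
      then have "i - d = degree p" "\<not> i < d" using False d_def by auto
      then show ?thesis using True lp unfolding g'_def c_def by (simp add: coeff_monom_mult)
    next
      case False
      then have gi: "i > degree g" using that by simp
      then have "coeff g i = 0" by (simp add: coeff_eq_0)
      moreover have "coeff p (i - d) = 0" using gi \<open>\<not> degree g < degree p\<close> d_def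
        by (intro coeff_eq_0) linarith
      ultimately show ?thesis unfolding g'_def by (simp add: coeff_monom_mult)
    qed
    show ?thesis
    proof (cases "g' = 0")
      case True
      then have "g mod p = 0" using \<open>g' mod p = g mod p\<close> by simp
      then show ?thesis using F by (simp add: PF_0)
    next
      case False
      then have "coeff g' (degree g') \<noteq> 0" by simp
      then have "degree g' < degree g" using coeff0 by (meson not_le)
      then have "g' mod p \<in> PF F" using less.hyps g'F by blast
      then show ?thesis using \<open>g' mod p = g mod p\<close> by simp
    qed
  qed
qed



lemma neg1_sq: "((-1::'a::comm_ring_1) ^ m) * (-1) ^ m = 1"
  by (simp add: power_mult_distrib[symmetric])

lemma res_in:
  fixes k :: "'a::field set"
  assumes ac: "alg_closed TYPE('a)" and sk: "sub_field k"
  shows "p \<in> PF k \<Longrightarrow> g \<in> PF k \<Longrightarrow> p \<noteq> 0 \<Longrightarrow> length xs = degree p \<Longrightarrow>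
         p = smult (lead_coeff p) (\<Prod>a\<leftarrow>xs. [:-a,1:]) \<Longrightarrow>
         lead_coeff p ^ degree g * (\<Prod>a\<leftarrow>xs. poly g a) \<in> k"
proof (induction "degree p + degree g" arbitrary: p g xs rule: less_induct)
  case less
  have sgn: "(-1::'a) ^ m \<in> k" for m using sk by (simp add: sf_power sf_uminus sf_1)
  have lcin: "lead_coeff q \<in> k" if "q \<in> PF k" for q using that by (simp add: PF_iff)
  have root: "poly q a = 0" if "q = smult (lead_coeff q) (\<Prod>a\<leftarrow>ys. [:-a,1:])" "a \<in> set ys" for q :: "'a poly" and ys a
  proof -
    have "poly q a = lead_coeff q * (\<Prod>b\<leftarrow>ys. a - b)"
      by (subst that(1)) (simp add: poly_linear_prod_list)
    then show ?thesis using that(2) by (force simp: prod_list_zero_iff)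
  qed
  have CA: "lead_coeff p' ^ degree g' * (\<Prod>a\<leftarrow>xs'. poly g' a) \<in> k"
    if h: "degree p' + degree g' = degree p + degree g" "degree p' \<le> degree g'"
      "p' \<in> PF k" "g' \<in> PF k" "p' \<noteq> 0" "length xs' = degree p'"
      "p' = smult (lead_coeff p') (\<Prod>a\<leftarrow>xs'. [:-a,1:])" for p' g' xs'
  proof (cases "degree p' = 0")
    case True
    then have "xs' = []" using h by simp
    have "lead_coeff p' \<in> k" using lcin h(3) by blast
    then show ?thesis using \<open>xs' = []\<close> sk by (simp add: sf_power)
  next
    case False
    define r where "r = g' mod p'"
    have rF: "r \<in> PF k" unfolding r_def using PF_mod[OF sk h(3) h(5) h(4)] .
    have pr: "(\<Prod>a\<leftarrow>xs'. poly g' a) = (\<Prod>a\<leftarrow>xs'. poly r a)"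
    proof -
      have "map (\<lambda>a. poly g' a) xs' = map (\<lambda>a. poly r a) xs'"
      proof (rule map_cong[OF refl])
        fix a assume "a \<in> set xs'"
        then have "poly p' a = 0" using root[OF h(7)] by blast
        then show "poly g' a = poly r a" unfolding r_def by (simp add: poly_mod)
      qed
      then show ?thesis by (rule arg_cong)
    qed
    show ?thesis
    proof (cases "r = 0")
      case True
      have "xs' \<noteq> []" using h False by auto
      then obtain a where "a \<in> set xs'" by (cases xs') auto
      then have "(\<Prod>a\<leftarrow>xs'. poly r a) = 0" using True by (force simp: prod_list_zero_iff)
      then show ?thesis using pr sk by (simp add: sf_0)
    next
      case rnz: False
      have dr: "degree r < degree p'" unfolding r_def using rnz h(5) r_def degree_mod_less' by blast
      obtain ys where ys: "length ys = degree r" "r = smult (lead_coeff r) (\<Prod>a\<leftarrow>ys. [:-a,1:])"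
        using split_list[OF ac rnz] by blast
      have E: "lead_coeff r ^ length xs' * (\<Prod>a\<leftarrow>ys. poly p' a) =
         (-1) ^ (length ys * length xs') * (lead_coeff p' ^ length ys * (\<Prod>b\<leftarrow>xs'. poly r b))"
        by (rule swap_res[OF ys(2) h(7)])
      have IH: "lead_coeff r ^ degree p' * (\<Prod>a\<leftarrow>ys. poly p' a) \<in> k"
        using less.hyps[of r p' ys] dr h rF rnz ys by auto
      define X where "X = lead_coeff p' ^ degree r * (\<Prod>b\<leftarrow>xs'. poly r b)"
      define s where "s = (-1::'a) ^ (length ys * length xs')"
      have "s * (lead_coeff r ^ degree p' * (\<Prod>a\<leftarrow>ys. poly p' a)) = s * s * X"
        using E h(6) ys(1) unfolding X_def s_def by simp
      also have "s * s = 1" unfolding s_def by (rule neg1_sq)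
      finally have "X \<in> k" using IH sgn sk unfolding s_def by (metis mult_1 sf_mult)
      moreover have "lead_coeff p' ^ degree g' * (\<Prod>a\<leftarrow>xs'. poly g' a) =
            lead_coeff p' ^ (degree g' - degree r) * X"
        unfolding pr X_def using dr h(2) by (simp add: power_add[symmetric])
      ultimately show ?thesis using sk lcin h(3) by (simp add: sf_mult sf_power)
    qed
  qed
  show ?case
  proof (cases "degree p \<le> degree g")
    case True
    then show ?thesis using CA less.prems by blast
  next
    case False
    show ?thesis
    proof (cases "g = 0")
      case True
      have "xs \<noteq> []" using less.prems False by auto
      then obtain a where "a \<in> set xs" by (cases xs) auto
      then have "(\<Prod>a\<leftarrow>xs. poly g a) = 0" using True by (force simp: prod_list_zero_iff)
      then show ?thesis using sk by (simp add: sf_0)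
    next
      case gnz: False
      obtain ys where ys: "length ys = degree g" "g = smult (lead_coeff g) (\<Prod>a\<leftarrow>ys. [:-a,1:])"
        using split_list[OF ac gnz] by blast
      have E: "lead_coeff p ^ length ys * (\<Prod>a\<leftarrow>xs. poly g a) =
         (-1) ^ (length xs * length ys) * (lead_coeff g ^ length xs * (\<Prod>b\<leftarrow>ys. poly p b))"
        by (rule swap_res[OF less.prems(5) ys(2)])
      have "lead_coeff g ^ degree p * (\<Prod>b\<leftarrow>ys. poly p b) \<in> k"
        using CA[of g p ys] False less.prems gnz ys by auto
      then show ?thesis using E ys(1) less.prems(4) sgn sk by (simp add: sf_mult)
    qed
  qed
qed

lemma norm_in_k:
  fixes k :: "'a::field set" and f \<delta> :: "'a poly"
  assumes ac: "alg_closed TYPE('a)" and sk: "sub_field k" and sf: "rsquarefree f"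
    and fk: "f \<in> PF k" and dk: "\<delta> \<in> PF k"
  shows "(\<Prod>\<theta>\<in>{\<theta>. poly f \<theta> = 0}. poly \<delta> \<theta>) \<in> k"
proof -
  obtain xs where xs: "distinct xs" "set xs = {x. poly f x = 0}" "length xs = degree f"
      "f = smult (lead_coeff f) (\<Prod>a\<leftarrow>xs. [:-a,1:])"
    using sep_split[OF ac sf] by blast
  have fnz: "f \<noteq> 0" using sf by (simp add: rsquarefree_def)
  have R: "lead_coeff f ^ degree \<delta> * (\<Prod>a\<leftarrow>xs. poly \<delta> a) \<in> k"
    using res_in[OF ac sk fk dk fnz xs(3) xs(4)] .
  have P: "(\<Prod>\<theta>\<in>{\<theta>. poly f \<theta> = 0}. poly \<delta> \<theta>) = (\<Prod>a\<leftarrow>xs. poly \<delta> a)"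
    using xs(1,2) by (metis prod.distinct_set_conv_list)
  have l: "lead_coeff f \<in> k" "lead_coeff f \<noteq> 0" using fk fnz by (auto simp: PF_iff)
  have "(\<Prod>a\<leftarrow>xs. poly \<delta> a) = inverse (lead_coeff f ^ degree \<delta>) * (lead_coeff f ^ degree \<delta> * (\<Prod>a\<leftarrow>xs. poly \<delta> a))"
    using l by (simp add: field_simps)
  also have "\<dots> \<in> k" using R l sk by (simp add: sf_mult sf_inverse sf_power)
  finally show ?thesis using P by simp
qed



lemma reduce_step:
  fixes g p :: "'a::field poly"
  assumes "p \<noteq> 0" "degree p \<le> degree g"
  shows "g - smult (lead_coeff g / lead_coeff p) (monom 1 (degree g - degree p) * p) = 0 \<or>
         degree (g - smult (lead_coeff g / lead_coeff p) (monom 1 (degree g - degree p) * p)) < degree g"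
proof -
  define d where "d = degree g - degree p"
  define c where "c = lead_coeff g / lead_coeff p"
  define g' where "g' = g - smult c (monom 1 d * p)"
  have lp: "lead_coeff p \<noteq> 0" using assms by simp
  have coeff0: "coeff g' i = 0" if "i \<ge> degree g" for i
  proof (cases "i = degree g")
    case True
    then have "i - d = degree p" "\<not> i < d" using assms d_def by auto
    then show ?thesis using True lp unfolding g'_def c_def by (simp add: coeff_monom_mult)
  next
    case False
    then have gi: "i > degree g" using that by simp
    then have "coeff g i = 0" by (simp add: coeff_eq_0)
    moreover have "coeff p (i - d) = 0" using gi assms d_def
      by (intro coeff_eq_0) linarith
    ultimately show ?thesis unfolding g'_def by (simp add: coeff_monom_mult)
  qed
  have "g' = 0 \<or> degree g' < degree g"
  proof (cases "g' = 0")
    case False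
    then have "coeff g' (degree g') \<noteq> 0" by simp
    then have "degree g' < degree g" using coeff0 by (meson not_le)
    then show ?thesis by simp
  qed simp
  then show ?thesis unfolding g'_def c_def d_def .
qed

definition emb :: "'a::field set \<Rightarrow> 'a \<Rightarrow> ('a \<times> 'a) set \<Rightarrow> bool" where
  "emb K r G \<longleftrightarrow> sub_field (Domain G) \<and> single_valued G \<and> (\<forall>x\<in>K. (x,x) \<in> G) \<and> (r, -r) \<in> G
     \<and> (1,1) \<in> G \<and> (\<forall>x a y b. (x,a) \<in> G \<longrightarrow> (y,b) \<in> G \<longrightarrow> (x+y, a+b) \<in> G \<and> (x*y, a*b) \<in> G)"

lemma emb_G0:
  fixes K :: "'a::field set"
  assumes sK: "sub_field K" and rK: "r \<notin> K" and NK: "r * r \<in> K"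
  shows "emb K r {(a + b * r, a - b * r) | a b. a \<in> K \<and> b \<in> K}"
    (is "emb K r ?G")
proof -
  define N where "N = r * r"
  have uniq: "a = a' \<and> b = b'" if "a \<in> K" "b \<in> K" "a' \<in> K" "b' \<in> K" "a + b * r = a' + b' * r" for a b a' b'
  proof -
    have "b = b'"
    proof (rule ccontr)
      assume "b \<noteq> b'"
      then have "r = (a' - a) / (b - b')" using that(5) by (simp add: field_simps)
      then have "r \<in> K" using that sK by (simp add: sf_diff sf_divide)
      then show False using rK by simp
    qed
    then show ?thesis using that by simp
  qed
  have dom: "Domain ?G = {a + b * r | a b. a \<in> K \<and> b \<in> K}" by auto
  have mem: "z \<in> {a + b * r | a b. a \<in> K \<and> b \<in> K}" if "z = a + b * r" "a \<in> K" "b \<in> K" for z a b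
    using that by blast
  have memG: "(z, w) \<in> ?G" if "z = a + b * r" "w = a - b * r" "a \<in> K" "b \<in> K" for z w a b
    using that by blast
  have sfD: "sub_field (Domain ?G)"
    unfolding sub_field_def dom
  proof (intro conjI ballI impI)
    show "0 \<in> {a + b * r |a b. a \<in> K \<and> b \<in> K}" by (rule mem[of 0 0 0]) (simp_all add: sf_0 sK)
    show "1 \<in> {a + b * r |a b. a \<in> K \<and> b \<in> K}" by (rule mem[of 1 1 0]) (simp_all add: sf_0 sf_1 sK)
    fix x y assume x: "x \<in> {a + b * r |a b. a \<in> K \<and> b \<in> K}" and y: "y \<in> {a + b * r |a b. a \<in> K \<and> b \<in> K}"
    then obtain a b c d where ab: "x = a + b * r" "a \<in> K" "b \<in> K" and cd: "y = c + d * r" "c \<in> K" "d \<in> K" by blast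
    have "x + y = (a + c) + (b + d) * r" using ab cd by (simp add: algebra_simps)
    then show "x + y \<in> {a + b * r |a b. a \<in> K \<and> b \<in> K}" by (rule mem) (use ab cd sK in \<open>simp_all add: sf_add\<close>)
    have "x * y = (a * c + b * d * N) + (a * d + b * c) * r" using ab cd by (simp add: algebra_simps N_def)
    then show "x * y \<in> {a + b * r |a b. a \<in> K \<and> b \<in> K}" 
      by (rule mem) (use ab cd sK NK in \<open>simp_all add: sf_add sf_mult N_def\<close>)
  next
    fix x assume x: "x \<in> {a + b * r |a b. a \<in> K \<and> b \<in> K}"
    then obtain a b where ab: "x = a + b * r" "a \<in> K" "b \<in> K" by blast
    have "- x = (- a) + (- b) * r" using ab by simp
    then show "- x \<in> {a + b * r |a b. a \<in> K \<and> b \<in> K}" by (rule mem) (use ab sK in \<open>simp_all add: sf_uminus\<close>)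
    assume "x \<noteq> 0"
    define D where "D = a * a - b * b * N"
    have DK: "D \<in> K" unfolding D_def N_def using ab sK NK by (simp add: sf_diff sf_mult)
    have Dnz: "D \<noteq> 0"
    proof
      assume "D = 0"
      then have "(a - b * r) * (a + b * r) = 0" unfolding D_def N_def by (simp add: algebra_simps)
      then have "a = b * r" using \<open>x \<noteq> 0\<close> ab by simp
      show False
      proof (cases "b = 0")
        case True
        then show False using \<open>a = b * r\<close> ab \<open>x \<noteq> 0\<close> by simp
      next
        case False
        then have "r = a / b" using \<open>a = b * r\<close> by simp
        then show False using rK sK ab by (simp add: sf_divide)
      qed
    qed
    have "inverse x = (a / D) + (- b / D) * r"
    proof -
      have e1: "(a / D) + (- b / D) * r = (a - b * r) / D" by (simp add: diff_divide_distrib)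
      have e2: "(a + b * r) * (a - b * r) = D" unfolding D_def N_def by (simp add: algebra_simps)
      have "x * ((a / D) + (- b / D) * r) = ((a + b * r) * (a - b * r)) / D" unfolding e1 ab(1) by simp
      also have "\<dots> = 1" using e2 Dnz by simp
      finally have "x * ((a / D) + (- b / D) * r) = 1" .
      then show ?thesis by (metis inverse_unique)
    qed
    then show "inverse x \<in> {a + b * r |a b. a \<in> K \<and> b \<in> K}"
      by (rule mem) (use ab sK DK in \<open>simp_all add: sf_divide sf_uminus\<close>)
  qed
  have sv: "single_valued ?G"
  proof (rule single_valuedI)
    fix x y z assume "(x, y) \<in> ?G" "(x, z) \<in> ?G"
    then obtain a b a' b' where "x = a + b * r" "y = a - b * r" "a \<in> K" "b \<in> K"
      "x = a' + b' * r" "z = a' - b' * r" "a' \<in> K" "b' \<in> K" by blast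
    then show "y = z" using uniq[of a b a' b'] by simp
  qed
  have K: "\<forall>x\<in>K. (x,x) \<in> ?G"
  proof
    fix x assume "x \<in> K"
    then show "(x,x) \<in> ?G" by (intro memG[of x x 0]) (simp_all add: sK sf_0)
  qed
  have r: "(r, -r) \<in> ?G" by (rule memG[of _ 0 1]) (simp_all add: sK sf_0 sf_1)
  have one: "(1, 1) \<in> ?G" by (rule memG[of _ 1 0]) (simp_all add: sK sf_0 sf_1)
  have cl: "(x+y, a'+b') \<in> ?G \<and> (x*y, a'*b') \<in> ?G" if hh: "(x,a') \<in> ?G" "(y,b') \<in> ?G" for x y a' b'
  proof -
    obtain a b c d where ab: "x = a + b * r" "a' = a - b * r" "a \<in> K" "b \<in> K"
      and cd: "y = c + d * r" "b' = c - d * r" "c \<in> K" "d \<in> K" using hh by blast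
    have 1: "(x + y, a' + b') = ((a + c) + (b + d) * r, (a + c) - (b + d) * r)"
      by (simp only: ab cd) (simp add: algebra_simps)
    have 2: "(x * y, a' * b') = ((a * c + b * d * N) + (a * d + b * c) * r, (a * c + b * d * N) - (a * d + b * c) * r)"
      by (simp only: ab cd) (simp add: algebra_simps N_def)
    have "((a + c) + (b + d) * r, (a + c) - (b + d) * r) \<in> ?G"
      by (rule memG[OF refl refl]) (use ab cd sK in \<open>simp_all add: sf_add\<close>)
    moreover have "((a * c + b * d * N) + (a * d + b * c) * r, (a * c + b * d * N) - (a * d + b * c) * r) \<in> ?G"
      by (rule memG[OF refl refl]) (use ab cd sK NK in \<open>simp_all add: sf_add sf_mult N_def\<close>)
    ultimately show ?thesis unfolding 1 2 by blast
  qed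
  show ?thesis unfolding emb_def using sfD sv K r one cl by blast
qed



lemma emb_D:
  assumes "emb K r G"
  shows "sub_field (Domain G)" "single_valued G" "\<And>x. x \<in> K \<Longrightarrow> (x,x) \<in> G" "(r, -r) \<in> G"
    "(1,1) \<in> G" "\<And>x a y b. (x,a) \<in> G \<Longrightarrow> (y,b) \<in> G \<Longrightarrow> (x+y, a+b) \<in> G"
    "\<And>x a y b. (x,a) \<in> G \<Longrightarrow> (y,b) \<in> G \<Longrightarrow> (x*y, a*b) \<in> G"
  using assms unfolding emb_def by blast+

lemma emb_chain:
  fixes C :: "('a::field \<times> 'a) set set"
  assumes ne: "C \<noteq> {}" and CA: "\<forall>G\<in>C. emb K r G" and ch: "\<forall>A\<in>C. \<forall>B\<in>C. A \<subseteq> B \<or> B \<subseteq> A"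
  shows "emb K r (\<Union>C)"
proof -
  have up: "\<exists>G\<in>C. G1 \<subseteq> G \<and> G2 \<subseteq> G" if u: "G1 \<in> C" "G2 \<in> C" for G1 G2
  proof -
    have "G1 \<subseteq> G2 \<or> G2 \<subseteq> G1" using bspec[OF bspec[OF ch u(1)] u(2)] .
    then show ?thesis
    proof
      assume "G1 \<subseteq> G2" then show ?thesis using u(2) by (intro bexI[of _ G2]) simp_all
    next
      assume "G2 \<subseteq> G1" then show ?thesis using u(1) by (intro bexI[of _ G1]) simp_all
    qed
  qed
  obtain G0 where G0: "G0 \<in> C" using ne by blast
  have sfG: "sub_field (Domain G)" if "G \<in> C" for G using CA that emb_D(1) by blast
  have sfU: "sub_field (Domain (\<Union>C))"
    unfolding sub_field_def
  proof (intro conjI ballI impI)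
    show "0 \<in> Domain (\<Union>C)" using sfG[OF G0] sf_0 G0 by blast
    show "1 \<in> Domain (\<Union>C)" using sfG[OF G0] sf_1 G0 by blast
  next
    fix x y assume "x \<in> Domain (\<Union>C)" "y \<in> Domain (\<Union>C)"
    then obtain G1 G2 where "G1 \<in> C" "G2 \<in> C" "x \<in> Domain G1" "y \<in> Domain G2" by blast
    then obtain G where G: "G \<in> C" "G1 \<subseteq> G" "G2 \<subseteq> G" using up by blast
    then have G: "G \<in> C" "x \<in> Domain G" "y \<in> Domain G"
      using \<open>x \<in> Domain G1\<close> \<open>y \<in> Domain G2\<close> by auto
    show "x + y \<in> Domain (\<Union>C)" using G sfG[OF G(1)] sf_add by blast
    show "x * y \<in> Domain (\<Union>C)" using G sfG[OF G(1)] sf_mult by blast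
  next
    fix x assume "x \<in> Domain (\<Union>C)"
    then obtain G where G: "G \<in> C" "x \<in> Domain G" by blast
    show "- x \<in> Domain (\<Union>C)" using G sfG[OF G(1)] sf_uminus by blast
    assume "x \<noteq> 0"
    show "inverse x \<in> Domain (\<Union>C)" using G sfG[OF G(1)] sf_inverse by blast
  qed
  have sv: "single_valued (\<Union>C)"
  proof (rule single_valuedI)
    fix x y z assume "(x, y) \<in> \<Union>C" "(x, z) \<in> \<Union>C"
    then obtain G1 G2 where "G1 \<in> C" "G2 \<in> C" "(x,y) \<in> G1" "(x,z) \<in> G2" by blast
    then obtain G where G: "G \<in> C" "(x,y) \<in> G" "(x,z) \<in> G" using up by blast
    have "single_valued G" using emb_D(2)[OF bspec[OF CA G(1)]] .
    then show "y = z" using G single_valuedD by metis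
  qed
  have e0: "emb K r G0" using bspec[OF CA G0] .
  have K: "\<forall>x\<in>K. (x,x) \<in> \<Union>C"
  proof
    fix x assume "x \<in> K"
    then have "(x,x) \<in> G0" by (rule emb_D(3)[OF e0])
    then show "(x,x) \<in> \<Union>C" by (rule UnionI[OF G0])
  qed
  have r: "(r, -r) \<in> \<Union>C" using emb_D(4)[OF e0] by (rule UnionI[OF G0])
  have one: "(1, 1) \<in> \<Union>C" using emb_D(5)[OF e0] by (rule UnionI[OF G0])
  have cl: "(x+y, a+b) \<in> \<Union>C \<and> (x*y, a*b) \<in> \<Union>C" if hh: "(x,a) \<in> \<Union>C" "(y,b) \<in> \<Union>C" for x a y b
  proof -
    obtain G1 G2 where "G1 \<in> C" "G2 \<in> C" "(x,a) \<in> G1" "(y,b) \<in> G2" using hh by blast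
    then obtain G where G: "G \<in> C" "(x,a) \<in> G" "(y,b) \<in> G" using up by blast
    have e: "emb K r G" using bspec[OF CA G(1)] .
    have "(x+y, a+b) \<in> G \<and> (x*y, a*b) \<in> G" using emb_D(6,7)[OF e G(2,3)] by blast
    then show ?thesis using G by blast
  qed
  show ?thesis unfolding emb_def using sfU sv K r one cl by meson
qed



lemma emb_fun:
  assumes e: "emb K r M"
  defines "\<phi> \<equiv> (\<lambda>x. THE a. (x,a) \<in> M)"
  shows "\<And>x a. (x,a) \<in> M \<Longrightarrow> \<phi> x = a" "\<And>x. x \<in> Domain M \<Longrightarrow> (x, \<phi> x) \<in> M"
    "phom (Domain M) \<phi>" "\<And>x. x \<in> K \<Longrightarrow> \<phi> x = x" "\<phi> r = - r"
proof -
  have sv: "single_valued M" using emb_D(2)[OF e] .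
  show phi: "\<phi> x = a" if xa: "(x,a) \<in> M" for x a
    unfolding \<phi>_def
  proof (rule the_equality)
    show "(x,a) \<in> M" by (rule xa)
    fix b assume "(x,b) \<in> M"
    then show "b = a" using sv xa single_valuedD by metis
  qed
  show phiM: "(x, \<phi> x) \<in> M" if xd: "x \<in> Domain M" for x
  proof -
    obtain a where xa: "(x,a) \<in> M" using xd by blast
    then show ?thesis using phi[OF xa] by simp
  qed
  have sF: "sub_field (Domain M)" using emb_D(1)[OF e] .
  have z: "\<phi> 0 = 0"
  proof -
    have "(0, \<phi> 0) \<in> M" using phiM sf_0[OF sF] .
    then have "(0 + 0, \<phi> 0 + \<phi> 0) \<in> M" using emb_D(6)[OF e] by blast
    then have "(0, \<phi> 0 + \<phi> 0) \<in> M" by simp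
    then have "\<phi> 0 = \<phi> 0 + \<phi> 0" by (rule phi)
    then show ?thesis by (metis add_cancel_right_right)
  qed
  have o: "\<phi> 1 = 1" using emb_D(5)[OF e] by (rule phi)
  show "phom (Domain M) \<phi>"
    unfolding phom_def
  proof (intro conjI ballI z o)
    fix x y assume "x \<in> Domain M" "y \<in> Domain M"
    then have "(x, \<phi> x) \<in> M" "(y, \<phi> y) \<in> M" using phiM by auto
    then have s1: "(x + y, \<phi> x + \<phi> y) \<in> M" and s2: "(x * y, \<phi> x * \<phi> y) \<in> M"
      using emb_D(6,7)[OF e] by blast+
    show "\<phi> (x + y) = \<phi> x + \<phi> y" by (rule phi[OF s1])
    show "\<phi> (x * y) = \<phi> x * \<phi> y" by (rule phi[OF s2])
  qed
  show "\<phi> x = x" if "x \<in> K" for x using emb_D(3)[OF e that] by (rule phi)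
  show "\<phi> r = - r" using emb_D(4)[OF e] by (rule phi)
qed

lemma alg_over_F:
  assumes "algebraic_over k y" "k \<subseteq> F"
  shows "\<exists>q. q \<in> PF F \<and> q \<noteq> 0 \<and> poly q y = 0"
  using assms unfolding algebraic_over_def PF_def by blast

lemma min_poly_ex:
  assumes "\<exists>q. P (q::'a::zero poly)"
  shows "\<exists>p. P p \<and> (\<forall>q. P q \<longrightarrow> degree p \<le> degree q)"
  using assms ex_has_least_nat[of P _ degree] by blast

lemma emb_extend:
  fixes k K :: "'a::field set"
  assumes ac: "alg_closed TYPE('a)" and alg: "\<forall>x. algebraic_over k x" and kK: "k \<subseteq> K"
    and e: "emb K r M" and nd: "\<alpha> \<notin> Domain M"
  shows "\<exists>G'. emb K r G' \<and> M \<subseteq> G' \<and> \<alpha> \<in> Domain G'"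
proof -
  define F where "F = Domain M"
  define \<phi> where "\<phi> = (\<lambda>x. THE a. (x,a) \<in> M)"
  have sF: "sub_field F" unfolding F_def using emb_D(1)[OF e] .
  have KF: "K \<subseteq> F" unfolding F_def using emb_D(3)[OF e] by blast
  have kF: "k \<subseteq> F" using kK KF by blast
  have phi: "\<phi> x = a" if "(x,a) \<in> M" for x a using emb_fun(1)[OF e that] unfolding \<phi>_def .
  have phiM: "(x, \<phi> x) \<in> M" if "x \<in> F" for x using emb_fun(2)[OF e] that unfolding \<phi>_def F_def .
  have ph: "phom F \<phi>" using emb_fun(3)[OF e] unfolding \<phi>_def F_def .
  have phK: "\<phi> x = x" if "x \<in> K" for x using emb_fun(4)[OF e that] unfolding \<phi>_def .
  have phr: "\<phi> r = - r" using emb_fun(5)[OF e] unfolding \<phi>_def .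
  have rF: "r \<in> F" unfolding F_def using emb_D(4)[OF e] by blast
  obtain p where p: "p \<in> PF F" "p \<noteq> 0" "poly p \<alpha> = 0"
     and pmin: "\<forall>q. q \<in> PF F \<and> q \<noteq> 0 \<and> poly q \<alpha> = 0 \<longrightarrow> degree p \<le> degree q"
    using min_poly_ex[of "\<lambda>q. q \<in> PF F \<and> q \<noteq> 0 \<and> poly q \<alpha> = 0"] alg_over_F[OF spec[OF alg] kF]
    by blast
  have dp: "degree p \<ge> 1"
  proof (rule ccontr)
    assume "\<not> degree p \<ge> 1"
    then have "degree p = 0" by simp
    then have "p = [:coeff p 0:]" by (metis degree_eq_zeroE coeff_pCons_0)
    then have "poly p \<alpha> = coeff p 0" by (metis poly_pCons poly_0 mult_zero_right add_0_right)
    moreover have "coeff p 0 \<noteq> 0" using \<open>degree p = 0\<close> p(2) by (metis leading_coeff_0_iff)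
    ultimately show False using p(3) by simp
  qed
  have lpF: "lead_coeff p \<in> F" using p(1) by (simp add: PF_iff)
  have "\<phi> (lead_coeff p) \<noteq> 0" using phom_nz[OF sF ph lpF] p(2) by simp
  then have dphp: "degree (map_poly \<phi> p) = degree p" by (rule map_poly_degree_eq)
  obtain \<beta> where \<beta>: "poly (map_poly \<phi> p) \<beta> = 0" using alg_closed_root[OF ac, of "map_poly \<phi> p"] dp dphp by auto
  have z: "\<phi> 0 = 0" using phom_0[OF ph] .
  have W: "poly (map_poly \<phi> g) \<beta> = 0" if "g \<in> PF F" "poly g \<alpha> = 0" for g
    using that
  proof (induction "degree g" arbitrary: g rule: less_induct)
    case less
    show ?case
    proof (cases "g = 0")
      case True then show ?thesis by simp
    next
      case gnz: False
      have le: "degree p \<le> degree g" using pmin less.prems gnz by blast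
      define c where "c = lead_coeff g / lead_coeff p"
      define d where "d = degree g - degree p"
      define g' where "g' = g - smult c (monom 1 d * p)"
      have cF: "c \<in> F" unfolding c_def using less.prems(1) lpF sF by (simp add: PF_iff sf_divide)
      have sF': "smult c (monom 1 d * p) \<in> PF F"
        using PF_smult[OF sF cF PF_mult[OF sF PF_monom[OF sF sf_1[OF sF]] p(1)]] .
      have g'F: "g' \<in> PF F" unfolding g'_def using PF_diff[OF sF less.prems(1) sF'] .
      have g'a: "poly g' \<alpha> = 0"
      proof -
        have "poly g' \<alpha> = poly g \<alpha> - c * (poly (monom 1 d) \<alpha> * poly p \<alpha>)"
          unfolding g'_def by (simp only: poly_diff poly_smult poly_mult)
        then show ?thesis using less.prems(2) p(3) by simp
      qed
      have red: "g' = 0 \<or> degree g' < degree g" unfolding g'_def c_def d_def by (rule reduce_step[OF p(2) le])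
      have g'b: "poly (map_poly \<phi> g') \<beta> = 0"
      proof (cases "g' = 0")
        case True then show ?thesis by simp
      next
        case False then show ?thesis using red less.hyps g'F g'a by blast
      qed
      have geq: "g = g' + smult c (monom 1 d * p)" unfolding g'_def by simp
      have "map_poly \<phi> g = map_poly \<phi> g' + map_poly \<phi> (smult c (monom 1 d * p))"
        by (subst geq, rule map_phom_add[OF sF ph g'F sF'])
      also have "map_poly \<phi> (smult c (monom 1 d * p)) = smult (\<phi> c) (monom 1 d * map_poly \<phi> p)"
        using map_phom_smult[OF sF ph cF, of "monom 1 d * p"] map_phom_monom_mult[OF ph, of d p]
          PF_mult[OF sF PF_monom[OF sF sf_1[OF sF]] p(1)] by simp
      finally show ?thesis using g'b \<beta> by simp
    qed
  qed
  define G' where "G' = {(poly g \<alpha>, poly (map_poly \<phi> g) \<beta>) | g. g \<in> PF F}"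
  have memG: "(poly g \<alpha>, poly (map_poly \<phi> g) \<beta>) \<in> G'" if "g \<in> PF F" for g
    unfolding G'_def using that by blast
  have dom: "Domain G' = {poly g \<alpha> | g. g \<in> PF F}" unfolding G'_def by auto
  have memD: "y \<in> Domain G'" if "y = poly g \<alpha>" "g \<in> PF F" for y g
    unfolding dom using that by blast
  have sv: "single_valued G'"
  proof (rule single_valuedI)
    fix x y z assume "(x, y) \<in> G'" "(x, z) \<in> G'"
    then obtain g h where gh: "x = poly g \<alpha>" "y = poly (map_poly \<phi> g) \<beta>" "g \<in> PF F"
       "x = poly h \<alpha>" "z = poly (map_poly \<phi> h) \<beta>" "h \<in> PF F" unfolding G'_def by blast
    have "poly (g - h) \<alpha> = 0" using gh by simp
    then have "poly (map_poly \<phi> (g - h)) \<beta> = 0" using W PF_diff[OF sF gh(3) gh(6)] by blast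
    then show "y = z" using gh map_phom_diff[OF sF ph gh(3) gh(6)] by simp
  qed
  have sfD: "sub_field (Domain G')"
    unfolding sub_field_def
  proof (intro conjI ballI impI)
    show "0 \<in> Domain G'" by (rule memD[of _ 0]) (simp_all add: PF_0 sF)
    show "1 \<in> Domain G'" by (rule memD[of _ "[:1:]"]) (simp_all add: PF_const sF sf_1)
  next
    fix x y assume "x \<in> Domain G'" "y \<in> Domain G'"
    then obtain g h where gh: "x = poly g \<alpha>" "g \<in> PF F" "y = poly h \<alpha>" "h \<in> PF F" unfolding dom by blast
    show "x + y \<in> Domain G'" by (rule memD[of _ "g + h"]) (use gh sF in \<open>simp_all add: PF_add\<close>)
    show "x * y \<in> Domain G'" by (rule memD[of _ "g * h"]) (use gh sF in \<open>simp_all add: PF_mult\<close>)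
  next
    fix y assume "y \<in> Domain G'"
    then obtain g where g: "y = poly g \<alpha>" "g \<in> PF F" unfolding dom by blast
    show "- y \<in> Domain G'" by (rule memD[of _ "- g"]) (use g sF in \<open>simp_all add: PF_uminus\<close>)
    assume ynz: "y \<noteq> 0"
    obtain q where q: "q \<in> PF F" "q \<noteq> 0" "poly q y = 0"
       and qmin: "\<forall>q'. q' \<in> PF F \<and> q' \<noteq> 0 \<and> poly q' y = 0 \<longrightarrow> degree q \<le> degree q'"
      using min_poly_ex[of "\<lambda>q. q \<in> PF F \<and> q \<noteq> 0 \<and> poly q y = 0"] alg_over_F[OF spec[OF alg] kF]
      by blast
    obtain c0 h where qc: "q = pCons c0 h" by (rule pCons_cases)
    have hF: "h \<in> PF F" "c0 \<in> F" using q(1) qc PF_pCons_iff[OF sF] by auto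
    have c0: "c0 \<noteq> 0"
    proof
      assume "c0 = 0"
      then have "y * poly h y = 0" using q(3) qc by simp
      then have hy: "poly h y = 0" using ynz by simp
      have hnz: "h \<noteq> 0" using q(2) qc \<open>c0 = 0\<close> by simp
      then have "degree q = Suc (degree h)" using qc by simp
      moreover have "degree q \<le> degree h" using qmin hF hnz hy by blast
      ultimately show False by simp
    qed
    have pf: "smult (- 1 / c0) (pcompose h g) \<in> PF F"
      using PF_smult[OF sF _ PF_pcompose[OF sF hF(1) g(2)]] sf_divide[OF sF sf_uminus[OF sF sf_1[OF sF]] hF(2)]
      by blast
    have "c0 + y * poly h y = 0" using q(3) qc by simp
    then have "inverse y = - poly h y / c0" using ynz c0
      by (simp add: field_simps) (metis add.commute add_eq_0_iff mult.commute)
    also have "\<dots> = poly (smult (- 1 / c0) (pcompose h g)) \<alpha>" using g(1) by (simp add: poly_pcompose)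
    finally show "inverse y \<in> Domain G'" by (rule memD[OF _ pf])
  qed
  have Kin: "(x, x) \<in> G'" if "x \<in> K" for x
  proof -
    have "(poly [:x:] \<alpha>, poly (map_poly \<phi> [:x:]) \<beta>) \<in> G'" using that KF sF by (intro memG PF_const) auto
    then show ?thesis using phK[OF that] map_phom_const[OF ph] by simp
  qed
  have rin: "(r, - r) \<in> G'"
  proof -
    have "(poly [:r:] \<alpha>, poly (map_poly \<phi> [:r:]) \<beta>) \<in> G'" using rF sF by (intro memG PF_const) auto
    then show ?thesis using phr map_phom_const[OF ph] by simp
  qed
  have oin: "(1, 1) \<in> G'"
  proof -
    have "(poly [:1:] \<alpha>, poly (map_poly \<phi> [:1:]) \<beta>) \<in> G'" using sF by (intro memG PF_const sf_1)
    then show ?thesis using phom_1[OF ph] map_phom_const[OF ph] by simp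
  qed
  have cl: "(x+y, a+b) \<in> G' \<and> (x*y, a*b) \<in> G'" if hh: "(x,a) \<in> G'" "(y,b) \<in> G'" for x a y b
  proof -
    obtain g h where gh: "x = poly g \<alpha>" "a = poly (map_poly \<phi> g) \<beta>" "g \<in> PF F"
       "y = poly h \<alpha>" "b = poly (map_poly \<phi> h) \<beta>" "h \<in> PF F" using hh unfolding G'_def by blast
    have "(poly (g + h) \<alpha>, poly (map_poly \<phi> (g + h)) \<beta>) \<in> G'" using gh sF by (intro memG PF_add)
    then have 1: "(x+y, a+b) \<in> G'" using gh map_phom_add[OF sF ph gh(3) gh(6)] by simp
    have "(poly (g * h) \<alpha>, poly (map_poly \<phi> (g * h)) \<beta>) \<in> G'" using gh sF by (intro memG PF_mult)
    then have 2: "(x*y, a*b) \<in> G'" using gh map_phom_mult[OF sF ph gh(3) gh(6)] by simp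
    show ?thesis using 1 2 by blast
  qed
  have eG': "emb K r G'" unfolding emb_def using sfD sv Kin rin oin cl by blast
  have sub: "M \<subseteq> G'"
  proof
    fix z assume "z \<in> M"
    then obtain x a where z: "z = (x,a)" "(x,a) \<in> M" by (cases z) auto
    then have "x \<in> F" unfolding F_def by blast
    have "(poly [:x:] \<alpha>, poly (map_poly \<phi> [:x:]) \<beta>) \<in> G'" using \<open>x \<in> F\<close> sF by (intro memG PF_const)
    then show "z \<in> G'" using z phi[OF z(2)] map_phom_const[OF ph] by simp
  qed
  have "\<alpha> \<in> Domain G'"
    by (rule memD[of _ "[:0, 1:]"]) (use sF in \<open>simp_all add: PF_pCons PF_const sf_0 sf_1\<close>)
  then show ?thesis using eG' sub by blast
qed



lemma sub_field_UNIV: "sub_field (UNIV :: 'a::field set)"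
  by (simp add: sub_field_def)

lemma exists_aut:
  fixes k K :: "'a::field set"
  assumes ac: "alg_closed TYPE('a)" and alg: "\<forall>x. algebraic_over k x" and kK: "k \<subseteq> K"
    and sK: "sub_field K" and rK: "r \<notin> K" and NK: "r * r \<in> K"
  shows "\<exists>\<sigma>. field_aut \<sigma> \<and> (\<forall>x\<in>K. \<sigma> x = x) \<and> \<sigma> r = - r"
proof -
  define A where "A = {G. emb K r G}"
  define G0 where "G0 = {(a + b * r, a - b * r) | a b. a \<in> K \<and> b \<in> K}"
  have eG0: "emb K r G0" using emb_G0[OF sK rK NK] unfolding G0_def .
  have "\<forall>C\<in>chains A. \<exists>U\<in>A. \<forall>X\<in>C. X \<subseteq> U"
  proof
    fix C assume "C \<in> chains A"
    then have CA: "C \<subseteq> A" and ch: "\<forall>A\<in>C. \<forall>B\<in>C. A \<subseteq> B \<or> B \<subseteq> A"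
      unfolding chains_def chain_subset_def by blast+
    show "\<exists>U\<in>A. \<forall>X\<in>C. X \<subseteq> U"
    proof (cases "C = {}")
      case True
      have "G0 \<in> A" unfolding A_def using eG0 by simp
      then show ?thesis using True by blast
    next
      case False
      have "\<forall>G\<in>C. emb K r G" using CA unfolding A_def by blast
      then have "emb K r (\<Union>C)" using emb_chain[OF False _ ch] by blast
      then have "\<Union>C \<in> A" unfolding A_def by simp
      then show ?thesis by blast
    qed
  qed
  then obtain M where M: "M \<in> A" "\<forall>X\<in>A. M \<subseteq> X \<longrightarrow> X = M" using Zorn_Lemma2[of A] by blast
  have e: "emb K r M" using M(1) unfolding A_def by simp
  have full: "Domain M = UNIV"
  proof (rule ccontr)
    assume "Domain M \<noteq> UNIV"
    then obtain \<alpha> where \<alpha>: "\<alpha> \<notin> Domain M" by blast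
    obtain G' where G': "emb K r G'" "M \<subseteq> G'" "\<alpha> \<in> Domain G'"
      using emb_extend[OF ac alg kK e \<alpha>] by blast
    have "G' \<in> A" using G'(1) unfolding A_def by simp
    then have "G' = M" using M(2) G'(2) by blast
    then show False using G'(3) \<alpha> by simp
  qed
  define \<sigma> where "\<sigma> = (\<lambda>x. THE a. (x,a) \<in> M)"
  have ph: "phom UNIV \<sigma>" using emb_fun(3)[OF e] full unfolding \<sigma>_def by simp
  have sK': "\<forall>x\<in>K. \<sigma> x = x" using emb_fun(4)[OF e] unfolding \<sigma>_def by blast
  have sr: "\<sigma> r = - r" using emb_fun(5)[OF e] unfolding \<sigma>_def .
  have sU: "sub_field (UNIV :: 'a set)" by (rule sub_field_UNIV)
  have inj: "inj \<sigma>" using phom_inj[OF sU ph] .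
  have surj: "surj \<sigma>"
  proof -
    have "y \<in> range \<sigma>" for y
    proof -
      obtain q where q: "q \<noteq> 0" "\<forall>i. coeff q i \<in> k" "poly q y = 0"
        using alg unfolding algebraic_over_def by blast
      define S where "S = {x. poly q x = 0}"
      have fin: "finite S" unfolding S_def using poly_roots_finite[OF q(1)] .
      have mq: "map_poly \<sigma> q = q"
      proof (rule poly_eqI)
        fix i show "coeff (map_poly \<sigma> q) i = coeff q i"
          using coeff_map_phom[OF ph] sK' q(2) kK by auto
      qed
      have qU: "q \<in> PF UNIV" by (simp add: PF_iff)
      have "\<sigma> ` S \<subseteq> S"
      proof
        fix z assume "z \<in> \<sigma> ` S"
        then obtain x where x: "x \<in> S" "z = \<sigma> x" by blast
        have "poly q (\<sigma> x) = \<sigma> (poly q x)"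
          using poly_map_phom[OF sU ph qU, of x] mq by simp
        also have "\<dots> = 0" using x(1) phom_0[OF ph] unfolding S_def by simp
        finally show "z \<in> S" using x unfolding S_def by simp
      qed
      then have "\<sigma> ` S = S" using endo_inj_surj[OF fin] inj inj_on_subset[of \<sigma> UNIV S] by blast
      moreover have "y \<in> S" unfolding S_def using q(3) by simp
      ultimately show ?thesis by blast
    qed
    then show ?thesis by blast
  qed
  have fa: "field_aut \<sigma>"
    unfolding field_aut_def using inj surj phom_1[OF ph] phom_add[OF ph] phom_mult[OF ph]
    by (simp add: bij_def)
  show ?thesis using fa sK' sr by blast
qed



locale setup6 =
  fixes k :: "'a::field set" and f \<delta> :: "'a poly"
  assumes ac: "alg_closed TYPE('a)" and sk: "sub_field k" and two: "(2::'a) \<noteq> 0"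
    and fk: "\<forall>i. coeff f i \<in> k" and degf: "degree f = 6" and sqf: "rsquarefree f"
    and dk: "\<forall>i. coeff \<delta> i \<in> k" and dinv: "\<exists>u. (\<forall>i. coeff u i \<in> k) \<and> (\<delta> * u) mod f = 1"
begin

definition Om :: "'a set" where "Om = {\<theta>. poly f \<theta> = 0}"
definition P :: "'a poly \<Rightarrow> 'a" where "P e = (\<Prod>\<theta>\<in>Om. poly e \<theta>)"

lemma fnz: "f \<noteq> 0" using sqf by (simp add: rsquarefree_def)
lemma Om_fin: "finite Om" unfolding Om_def using poly_roots_finite[OF fnz] .
lemma card_Om: "card Om = 6" unfolding Om_def using card_roots_sep[OF ac sqf] degf by simp
lemma Om_iff: "\<theta> \<in> Om \<longleftrightarrow> poly f \<theta> = 0" by (simp add: Om_def)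

lemma dvd_Om: assumes "\<forall>\<theta>\<in>Om. poly q \<theta> = 0" shows "f dvd q"
proof -
  obtain xs where xs: "distinct xs" "set xs = Om" "f = smult (lead_coeff f) (\<Prod>a\<leftarrow>xs. [:-a,1:])"
    using sep_split[OF ac sqf] unfolding Om_def by blast
  have "(\<Prod>a\<leftarrow>xs. [:-a,1:]) = (\<Prod>a\<in>Om. [:-a,1:])"
    using xs(1,2) by (metis prod.distinct_set_conv_list)
  moreover have "(\<Prod>a\<in>Om. [:-a,1:]) dvd q" using vanish_dvd[OF Om_fin assms] .
  ultimately have "(\<Prod>a\<leftarrow>xs. [:-a,1:]) dvd q" by simp
  then have "smult (lead_coeff f) (\<Prod>a\<leftarrow>xs. [:-a,1:]) dvd q" using fnz by (simp add: smult_dvd_iff)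
  then show ?thesis using xs(3) by simp
qed

lemma mod_eq_Om: "a mod f = b mod f \<longleftrightarrow> (\<forall>\<theta>\<in>Om. poly a \<theta> = poly b \<theta>)"
proof
  assume "a mod f = b mod f"
  then have "f dvd a - b" by (simp add: mod_eq_dvd_iff)
  then obtain c where "a - b = f * c" by (elim dvdE)
  then have eq: "poly a \<theta> - poly b \<theta> = poly f \<theta> * poly c \<theta>" for \<theta> by (metis poly_diff poly_mult)
  show "\<forall>\<theta>\<in>Om. poly a \<theta> = poly b \<theta>"
  proof
    fix \<theta> assume "\<theta> \<in> Om"
    then have "poly a \<theta> - poly b \<theta> = 0" using eq[of \<theta>] by (simp add: Om_def)
    then show "poly a \<theta> = poly b \<theta>" by simp
  qed
next
  assume "\<forall>\<theta>\<in>Om. poly a \<theta> = poly b \<theta>"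
  then have "f dvd a - b" by (intro dvd_Om) simp
  then show "a mod f = b mod f" by (simp add: mod_eq_dvd_iff)
qed

lemma poly_mod_Om: "\<theta> \<in> Om \<Longrightarrow> poly (a mod f) \<theta> = poly a \<theta>"
  by (simp add: Om_def poly_mod)

lemma delta_nz: assumes "\<theta> \<in> Om" shows "poly \<delta> \<theta> \<noteq> 0"
proof -
  obtain u where u: "(\<delta> * u) mod f = 1" using dinv by blast
  have "poly ((\<delta> * u) mod f) \<theta> = 1" using u by simp
  then have "poly \<delta> \<theta> * poly u \<theta> = 1" using poly_mod_Om[OF assms] by simp
  then show ?thesis by auto
qed

lemma sqrt_iff: "is_sqrt_mod f \<delta> e \<longleftrightarrow> (\<forall>\<theta>\<in>Om. poly e \<theta> * poly e \<theta> = poly \<delta> \<theta>)"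
proof -
  have "is_sqrt_mod f \<delta> e \<longleftrightarrow> (e * e) mod f = \<delta> mod f" by (simp add: is_sqrt_mod_def)
  also have "\<dots> \<longleftrightarrow> (\<forall>\<theta>\<in>Om. poly e \<theta> * poly e \<theta> = poly \<delta> \<theta>)" by (simp add: mod_eq_Om)
  finally show ?thesis .
qed

lemma sqrt_nz: "is_sqrt_mod f \<delta> e \<Longrightarrow> \<theta> \<in> Om \<Longrightarrow> poly e \<theta> \<noteq> 0"
  using sqrt_iff delta_nz by fastforce

lemma inv_ex: assumes "is_sqrt_mod f \<delta> e" shows "\<exists>u. (u * e) mod f = 1"
proof -
  obtain u0 where u0: "(\<delta> * u0) mod f = 1" using dinv by blast
  have "\<forall>\<theta>\<in>Om. poly (u0 * e * e) \<theta> = poly 1 \<theta>"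
  proof
    fix \<theta> assume th: "\<theta> \<in> Om"
    have "poly \<delta> \<theta> * poly u0 \<theta> = 1" using u0 poly_mod_Om[OF th, of "\<delta> * u0"] by simp
    moreover have "poly e \<theta> * poly e \<theta> = poly \<delta> \<theta>" using assms th sqrt_iff by blast
    ultimately show "poly (u0 * e * e) \<theta> = poly 1 \<theta>" by (simp, metis mult.assoc mult.commute)
  qed
  then have "(u0 * e * e) mod f = 1 mod f" using mod_eq_Om by blast
  also have "1 mod f = (1 :: 'a poly)" using degf by (simp add: mod_poly_less)
  finally show ?thesis by blast
qed

lemma line_vals:
  assumes "p \<in> line_of f e"
  shows "degree p < degree f \<and> (\<exists>s t. \<forall>\<theta>\<in>Om. poly p \<theta> * poly e \<theta> = s * \<theta> + t)"
proof -
  obtain u s t where ust: "(u * e) mod f = 1" "p = (u * [:t, s:]) mod f"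
    using assms unfolding line_of_def by blast
  have "degree p < degree f"
    using degree_mod_less[OF fnz, of "u * [:t, s:]"] ust(2) degf by auto
  moreover have "\<forall>\<theta>\<in>Om. poly p \<theta> * poly e \<theta> = s * \<theta> + t"
  proof
    fix \<theta> assume th: "\<theta> \<in> Om"
    have "poly u \<theta> * poly e \<theta> = 1" using poly_mod_Om[OF th, of "u * e"] ust(1) by simp
    moreover have "poly p \<theta> = poly u \<theta> * (t + \<theta> * s)" using poly_mod_Om[OF th] ust(2) by (simp add: algebra_simps)
    ultimately show "poly p \<theta> * poly e \<theta> = s * \<theta> + t"
      by (metis (no_types, lifting) add.commute mult.assoc mult.commute mult_1)
  qed
  ultimately show ?thesis by blast
qed

lemma line_char:
  assumes sq: "is_sqrt_mod f \<delta> e"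
  shows "p \<in> line_of f e \<longleftrightarrow> degree p < degree f \<and> (\<exists>s t. \<forall>\<theta>\<in>Om. poly p \<theta> * poly e \<theta> = s * \<theta> + t)"
proof
  assume "p \<in> line_of f e" then show "degree p < degree f \<and> (\<exists>s t. \<forall>\<theta>\<in>Om. poly p \<theta> * poly e \<theta> = s * \<theta> + t)"
    by (rule line_vals)
next
  assume h: "degree p < degree f \<and> (\<exists>s t. \<forall>\<theta>\<in>Om. poly p \<theta> * poly e \<theta> = s * \<theta> + t)"
  then obtain s t where st: "\<forall>\<theta>\<in>Om. poly p \<theta> * poly e \<theta> = s * \<theta> + t" by blast
  obtain u where u: "(u * e) mod f = 1" using inv_ex[OF sq] by blast
  have "\<forall>\<theta>\<in>Om. poly p \<theta> = poly (u * [:t, s:]) \<theta>"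
  proof
    fix \<theta> assume th: "\<theta> \<in> Om"
    have ue: "poly u \<theta> * poly e \<theta> = 1" using poly_mod_Om[OF th, of "u * e"] u by simp
    have "poly p \<theta> = poly p \<theta> * (poly u \<theta> * poly e \<theta>)" using ue by simp
    also have "\<dots> = poly u \<theta> * (poly p \<theta> * poly e \<theta>)" by (simp add: algebra_simps)
    also have "\<dots> = poly u \<theta> * (s * \<theta> + t)" using st th by simp
    also have "\<dots> = poly (u * [:t, s:]) \<theta>" by (simp add: algebra_simps)
    finally show "poly p \<theta> = poly (u * [:t, s:]) \<theta>" .
  qed
  then have "p mod f = (u * [:t, s:]) mod f" using mod_eq_Om by blast
  moreover have "p mod f = p" using h by (simp add: mod_poly_less)
  ultimately show "p \<in> line_of f e" unfolding line_of_def using u by auto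
qed

end



context setup6 begin

lemma P_nz: "is_sqrt_mod f \<delta> e \<Longrightarrow> P e \<noteq> 0"
  unfolding P_def using Om_fin sqrt_nz by (simp add: prod_zero_iff)

lemma sq_cases: assumes "is_sqrt_mod f \<delta> e" "is_sqrt_mod f \<delta> e'" "\<theta> \<in> Om"
  shows "poly e' \<theta> = poly e \<theta> \<or> poly e' \<theta> = - poly e \<theta>"
proof -
  have "poly e' \<theta> * poly e' \<theta> = poly e \<theta> * poly e \<theta>" using assms sqrt_iff by auto
  then have "(poly e' \<theta> - poly e \<theta>) * (poly e' \<theta> + poly e \<theta>) = 0" by (simp add: algebra_simps)
  then show ?thesis by (auto simp: eq_neg_iff_add_eq_0)
qed

lemma neg1_pow_eq1: "((-1::'a) ^ n = 1) \<longleftrightarrow> even n"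
proof
  assume h: "(-1::'a) ^ n = 1"
  show "even n"
  proof (rule ccontr)
    assume "odd n"
    then have "(-1::'a) = 1" using h by simp
    then have "(2::'a) = 0" by (metis add_eq_0_iff one_add_one)
    then show False using two by simp
  qed
qed simp

lemma par:
  assumes sq: "is_sqrt_mod f \<delta> e" and sq': "is_sqrt_mod f \<delta> e'"
  shows "even (card {\<theta>. poly f \<theta> = 0 \<and> poly e' \<theta> / poly e \<theta> = -1}) \<longleftrightarrow> P e' = P e"
proof -
  define S where "S = {\<theta>. poly f \<theta> = 0 \<and> poly e' \<theta> / poly e \<theta> = -1}"
  have SOm: "S \<subseteq> Om" unfolding S_def Om_def by auto
  have c: "poly e' \<theta> = (if \<theta> \<in> S then -1 else 1) * poly e \<theta>" if th: "\<theta> \<in> Om" for \<theta>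
  proof -
    have enz: "poly e \<theta> \<noteq> 0" using sqrt_nz[OF sq th] .
    show ?thesis
    proof (cases "\<theta> \<in> S")
      case True
      then have "poly e' \<theta> / poly e \<theta> = -1" unfolding S_def by simp
      then show ?thesis using True enz by (simp add: field_simps)
    next
      case False
      then have "poly e' \<theta> / poly e \<theta> \<noteq> -1" using th unfolding S_def Om_def by simp
      then have "poly e' \<theta> \<noteq> - poly e \<theta>" using enz by auto
      then show ?thesis using sq_cases[OF sq sq' th] False by simp
    qed
  qed
  have "P e' = (\<Prod>\<theta>\<in>Om. (if \<theta> \<in> S then -1 else 1) * poly e \<theta>)"
    unfolding P_def using c by (intro prod.cong) auto
  also have "\<dots> = (\<Prod>\<theta>\<in>Om. (if \<theta> \<in> S then -1 else 1)) * P e"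
    unfolding P_def by (rule prod.distrib)
  also have "(\<Prod>\<theta>\<in>Om. (if \<theta> \<in> S then -1 else (1::'a))) = (-1) ^ card S"
  proof -
    have "(\<Prod>\<theta>\<in>Om. (if \<theta> \<in> S then -1 else (1::'a))) = (\<Prod>\<theta>\<in>Om \<inter> {x. x \<in> S}. -1) * (\<Prod>\<theta>\<in>Om \<inter> - {x. x \<in> S}. 1)"
      by (rule prod.If_cases[OF Om_fin])
    also have "Om \<inter> {x. x \<in> S} = S" using SOm by auto
    finally show ?thesis by simp
  qed
  finally have "P e' = (-1) ^ card S * P e" .
  then have "P e' = P e \<longleftrightarrow> (-1::'a) ^ card S = 1" using P_nz[OF sq] by auto
  then show ?thesis unfolding S_def using neg1_pow_eq1 by simp
qed

lemma P_sq: assumes "is_sqrt_mod f \<delta> e" shows "P e * P e = norm_A f \<delta>"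
proof -
  have "P e * P e = (\<Prod>\<theta>\<in>Om. poly e \<theta> * poly e \<theta>)" unfolding P_def by (simp add: prod.distrib)
  also have "\<dots> = (\<Prod>\<theta>\<in>Om. poly \<delta> \<theta>)" using assms sqrt_iff by (intro prod.cong) auto
  finally show ?thesis unfolding norm_A_def Om_def .
qed

lemma line_eq:
  assumes sq: "is_sqrt_mod f \<delta> e" and sq': "is_sqrt_mod f \<delta> e'" and L: "line_of f e = line_of f e'"
  shows "P e = P e'"
proof -
  obtain u where u: "(u * e) mod f = 1" using inv_ex[OF sq] by blast
  define p0 where "p0 = (u * [:1, 0:]) mod f"
  have "p0 \<in> line_of f e" unfolding line_of_def p0_def using u by blast
  then have "p0 \<in> line_of f e'" using L by simp
  then obtain s t where st: "\<forall>\<theta>\<in>Om. poly p0 \<theta> * poly e' \<theta> = s * \<theta> + t" using line_vals by blast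
  have rel: "poly e' \<theta> = (s * \<theta> + t) * poly e \<theta>" if th: "\<theta> \<in> Om" for \<theta>
  proof -
    have ue: "poly u \<theta> * poly e \<theta> = 1" using poly_mod_Om[OF th, of "u * e"] u by simp
    have pu: "poly p0 \<theta> = poly u \<theta>" unfolding p0_def using poly_mod_Om[OF th] by simp
    have "poly p0 \<theta> * poly e' \<theta> = s * \<theta> + t" using st th by blast
    then have "poly u \<theta> * poly e' \<theta> = s * \<theta> + t" using pu by simp
    then have "poly e \<theta> * (poly u \<theta> * poly e' \<theta>) = (s * \<theta> + t) * poly e \<theta>" by simp
    then show ?thesis using ue by (simp add: algebra_simps) (metis mult.assoc mult.commute mult_1)
  qed
  define Q where "Q = [:t * t - 1, 2 * s * t, s * s:]"
  have Q0: "poly Q \<theta> = 0" if th: "\<theta> \<in> Om" for \<theta>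
  proof -
    have "poly e' \<theta> * poly e' \<theta> = poly e \<theta> * poly e \<theta>" using sq sq' th sqrt_iff by auto
    then have "((s * \<theta> + t) * (s * \<theta> + t) - 1) * (poly e \<theta> * poly e \<theta>) = 0"
      using rel[OF th] by (simp add: algebra_simps)
    then have "(s * \<theta> + t) * (s * \<theta> + t) - 1 = 0" using sqrt_nz[OF sq th] by simp
    then show ?thesis unfolding Q_def by (simp add: algebra_simps)
  qed
  have "Q = 0"
  proof (rule ccontr)
    assume "Q \<noteq> 0"
    then have "card {x. poly Q x = 0} \<le> degree Q" by (rule card_poly_roots_bound)
    moreover have "degree Q \<le> 2" unfolding Q_def by (simp add: degree_pCons_le)
    moreover have "Om \<subseteq> {x. poly Q x = 0}" using Q0 by auto
    then have "card Om \<le> card {x. poly Q x = 0}"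
      using poly_roots_finite[OF \<open>Q \<noteq> 0\<close>] by (rule card_mono[rotated])
    ultimately show False using card_Om by simp
  qed
  then have "s * s = 0" "t * t - 1 = 0" unfolding Q_def by simp_all
  then have s0: "s = 0" and t1: "t * t = 1" by simp_all
  have "P e' = (\<Prod>\<theta>\<in>Om. t * poly e \<theta>)" unfolding P_def using rel s0 by (intro prod.cong) auto
  also have "\<dots> = t ^ 6 * P e" unfolding P_def by (simp add: prod.distrib card_Om)
  also have "t ^ 6 = (t * t) ^ 3"
  proof -
    have "t ^ 6 = t ^ (2 * 3)" by simp
    also have "\<dots> = (t ^ 2) ^ 3" by (rule power_mult)
    finally show ?thesis by (simp add: power2_eq_square)
  qed
  finally show ?thesis using t1 by simp
qed

lemma sqrt_ex: "\<exists>e. is_sqrt_mod f \<delta> e"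
proof -
  have "\<exists>x. x * x = poly \<delta> \<theta>" for \<theta>
  proof -
    have "degree [:- poly \<delta> \<theta>, 0, 1:] \<ge> 1" by simp
    then obtain x where "poly [:- poly \<delta> \<theta>, 0, 1:] x = 0" using alg_closed_root[OF ac] by blast
    then show ?thesis by (intro exI[of _ x]) (simp add: algebra_simps)
  qed
  then have v: "(SOME x. x * x = poly \<delta> \<theta>) * (SOME x. x * x = poly \<delta> \<theta>) = poly \<delta> \<theta>" for \<theta>
    by (rule someI_ex)
  obtain e where e: "\<forall>\<theta>\<in>Om. poly e \<theta> = (SOME x. x * x = poly \<delta> \<theta>)"
    using interpolate[OF Om_fin, of "\<lambda>\<theta>. SOME x. x * x = poly \<delta> \<theta>"] by blast
  then have "is_sqrt_mod f \<delta> e" using v sqrt_iff by simp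
  then show ?thesis by blast
qed

end



lemma faut_phom: assumes "field_aut \<tau>" shows "phom UNIV \<tau>"
proof -
  have add: "\<tau> (x + y) = \<tau> x + \<tau> y" and mul: "\<tau> (x * y) = \<tau> x * \<tau> y" and o: "\<tau> 1 = 1" for x y
    using assms unfolding field_aut_def by auto
  have "\<tau> 0 = \<tau> 0 + \<tau> 0" using add[of 0 0] by simp
  then have "\<tau> 0 = 0" by (metis add_cancel_right_right)
  then show ?thesis unfolding phom_def using add mul o by simp
qed

lemma faut_inv:
  assumes fa: "field_aut \<tau>"
  shows "field_aut (inv \<tau>)"
proof -
  have b: "bij \<tau>" using fa by (simp add: field_aut_def)
  then have i: "inj \<tau>" and s: "surj \<tau>" by (auto simp: bij_def)
  have add: "\<tau> (x + y) = \<tau> x + \<tau> y" and mul: "\<tau> (x * y) = \<tau> x * \<tau> y" and o: "\<tau> 1 = 1" for x y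
    using fa unfolding field_aut_def by auto
  have "inv \<tau> 1 = 1" using o inv_f_f[OF i, of 1] by simp
  moreover have "inv \<tau> (x + y) = inv \<tau> x + inv \<tau> y" for x y
  proof -
    have "\<tau> (inv \<tau> x + inv \<tau> y) = x + y" using add surj_f_inv_f[OF s] by simp
    then show ?thesis using inv_f_f[OF i] by metis
  qed
  moreover have "inv \<tau> (x * y) = inv \<tau> x * inv \<tau> y" for x y
  proof -
    have "\<tau> (inv \<tau> x * inv \<tau> y) = x * y" using mul surj_f_inv_f[OF s] by simp
    then show ?thesis using inv_f_f[OF i] by metis
  qed
  ultimately show ?thesis unfolding field_aut_def using bij_imp_bij_inv[OF b] by simp
qed

lemma faut_inv_fix: assumes "field_aut \<tau>" "\<tau> x = x" shows "inv \<tau> x = x"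
proof -
  have "inj \<tau>" using assms by (simp add: field_aut_def bij_def)
  then show ?thesis using inv_f_f assms(2) by metis
qed

lemma faut_map_inv: assumes fa: "field_aut \<tau>"
  shows "map_poly \<tau> (map_poly (inv \<tau>) p) = p" "map_poly (inv \<tau>) (map_poly \<tau> p) = p"
proof -
  have z: "\<tau> 0 = 0" using phom_0[OF faut_phom[OF fa]] .
  have zi: "inv \<tau> 0 = 0" using phom_0[OF faut_phom[OF faut_inv[OF fa]]] .
  have b: "bij \<tau>" using fa by (simp add: field_aut_def)
  then have i: "inj \<tau>" and s: "surj \<tau>" by (auto simp: bij_def)
  show "map_poly \<tau> (map_poly (inv \<tau>) p) = p"
    by (simp add: map_poly_map_poly z zi surj_f_inv_f[OF s] map_poly_idI)
  show "map_poly (inv \<tau>) (map_poly \<tau> p) = p"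
    by (simp add: map_poly_map_poly z zi inv_f_f[OF i] map_poly_idI)
qed

context setup6 begin

context
  fixes \<tau> :: "'a \<Rightarrow> 'a"
  assumes fa: "field_aut \<tau>" and fixk: "\<forall>x\<in>k. \<tau> x = x"
begin

lemma t_phom: "phom UNIV \<tau>" using faut_phom[OF fa] .
lemma t_inj: "inj \<tau>" using fa by (simp add: field_aut_def bij_def)
lemma t_0: "\<tau> 0 = 0" using phom_0[OF t_phom] .

lemma t_poly: "poly (map_poly \<tau> p) (\<tau> x) = \<tau> (poly p x)"
  using poly_map_phom[OF sub_field_UNIV t_phom, of p x] by (simp add: PF_iff)

lemma t_fix_poly: "\<forall>i. coeff q i \<in> k \<Longrightarrow> map_poly \<tau> q = q"
  by (rule poly_eqI) (simp add: coeff_map_poly t_0 fixk)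

lemma t_Om: "\<tau> ` Om = Om"
proof -
  have "\<tau> ` Om \<subseteq> Om"
  proof
    fix z assume "z \<in> \<tau> ` Om"
    then obtain x where x: "x \<in> Om" "z = \<tau> x" by blast
    have "poly f (\<tau> x) = \<tau> (poly f x)" using t_poly[of f x] t_fix_poly[OF fk] by simp
    then show "z \<in> Om" using x t_0 by (simp add: Om_def)
  qed
  then show ?thesis using endo_inj_surj[OF Om_fin] t_inj inj_on_subset by blast
qed

lemma t_sqrt: assumes "is_sqrt_mod f \<delta> e" shows "is_sqrt_mod f \<delta> (map_poly \<tau> e)"
  unfolding sqrt_iff
proof
  fix \<theta>' assume "\<theta>' \<in> Om"
  then obtain \<theta> where th: "\<theta> \<in> Om" "\<theta>' = \<tau> \<theta>" using t_Om by blast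
  have "poly e \<theta> * poly e \<theta> = poly \<delta> \<theta>" using assms th sqrt_iff by blast
  then have "\<tau> (poly e \<theta>) * \<tau> (poly e \<theta>) = \<tau> (poly \<delta> \<theta>)" using phom_mult[OF t_phom] by (metis UNIV_I)
  then show "poly (map_poly \<tau> e) \<theta>' * poly (map_poly \<tau> e) \<theta>' = poly \<delta> \<theta>'"
    using th t_poly t_poly[of \<delta>] t_fix_poly[OF dk] by simp
qed

lemma t_P: "P (map_poly \<tau> e) = \<tau> (P e)"
proof -
  have io: "inj_on \<tau> Om" using t_inj inj_on_subset by blast
  have "P (map_poly \<tau> e) = (\<Prod>\<theta>\<in>\<tau> ` Om. poly (map_poly \<tau> e) \<theta>)" unfolding P_def using t_Om by simp
  also have "\<dots> = (\<Prod>\<theta>\<in>Om. poly (map_poly \<tau> e) (\<tau> \<theta>))" using prod.reindex[OF io] by simp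
  also have "\<dots> = (\<Prod>\<theta>\<in>Om. \<tau> (poly e \<theta>))" using t_poly by simp
  also have "\<dots> = \<tau> (P e)" unfolding P_def using phom_prod[OF sub_field_UNIV t_phom, of Om "poly e"] by simp
  finally show ?thesis .
qed

lemma t_line_sub: assumes sq: "is_sqrt_mod f \<delta> e"
  shows "act_line \<tau> (line_of f e) \<subseteq> line_of f (map_poly \<tau> e)"
proof
  fix q assume "q \<in> act_line \<tau> (line_of f e)"
  then obtain p where p: "p \<in> line_of f e" "q = map_poly \<tau> p" unfolding act_line_def by blast
  obtain s t where st: "degree p < degree f" "\<forall>\<theta>\<in>Om. poly p \<theta> * poly e \<theta> = s * \<theta> + t"
    using line_vals[OF p(1)] by blast
  have "degree q = degree p" unfolding p(2)
    by (rule degree_map_poly) (use t_inj t_0 in \<open>metis injD\<close>)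
  then have dq: "degree q < degree f" using st by simp
  have "\<forall>\<theta>'\<in>Om. poly q \<theta>' * poly (map_poly \<tau> e) \<theta>' = \<tau> s * \<theta>' + \<tau> t"
  proof
    fix \<theta>' assume "\<theta>' \<in> Om"
    then obtain \<theta> where th: "\<theta> \<in> Om" "\<theta>' = \<tau> \<theta>" using t_Om by blast
    have "poly q \<theta>' * poly (map_poly \<tau> e) \<theta>' = \<tau> (poly p \<theta>) * \<tau> (poly e \<theta>)"
      using th p(2) t_poly by simp
    also have "\<dots> = \<tau> (poly p \<theta> * poly e \<theta>)" using phom_mult[OF t_phom] by (metis UNIV_I)
    also have "\<dots> = \<tau> (s * \<theta> + t)" using st th by simp
    also have "\<dots> = \<tau> s * \<theta>' + \<tau> t" using th phom_mult[OF t_phom] phom_add[OF t_phom] by (metis UNIV_I)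
    finally show "poly q \<theta>' * poly (map_poly \<tau> e) \<theta>' = \<tau> s * \<theta>' + \<tau> t" .
  qed
  then show "q \<in> line_of f (map_poly \<tau> e)" using line_char[OF t_sqrt[OF sq]] dq by blast
qed

end

lemma faut_line:
  assumes fa: "field_aut \<tau>" and fixk: "\<forall>x\<in>k. \<tau> x = x" and sq: "is_sqrt_mod f \<delta> e"
  shows "act_line \<tau> (line_of f e) = line_of f (map_poly \<tau> e)"
proof
  show "act_line \<tau> (line_of f e) \<subseteq> line_of f (map_poly \<tau> e)" using t_line_sub[OF fa fixk sq] .
  have fa': "field_aut (inv \<tau>)" using faut_inv[OF fa] .
  have fixk': "\<forall>x\<in>k. inv \<tau> x = x" using faut_inv_fix[OF fa] fixk by blast
  have sq': "is_sqrt_mod f \<delta> (map_poly \<tau> e)" using t_sqrt[OF fa fixk sq] .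
  have "act_line (inv \<tau>) (line_of f (map_poly \<tau> e)) \<subseteq> line_of f (map_poly (inv \<tau>) (map_poly \<tau> e))"
    using t_line_sub[OF fa' fixk' sq'] .
  then have sub: "act_line (inv \<tau>) (line_of f (map_poly \<tau> e)) \<subseteq> line_of f e" using faut_map_inv(2)[OF fa] by simp
  show "line_of f (map_poly \<tau> e) \<subseteq> act_line \<tau> (line_of f e)"
  proof
    fix q assume q: "q \<in> line_of f (map_poly \<tau> e)"
    then have "map_poly (inv \<tau>) q \<in> line_of f e" using sub unfolding act_line_def by blast
    moreover have "q = map_poly \<tau> (map_poly (inv \<tau>) q)" using faut_map_inv(1)[OF fa] by simp
    ultimately show "q \<in> act_line \<tau> (line_of f e)" unfolding act_line_def by blast
  qed
qed

end



lemma sub_field_Inter: "(\<And>F. F \<in> FF \<Longrightarrow> sub_field F) \<Longrightarrow> sub_field (\<Inter>FF)"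
  unfolding sub_field_def by blast

lemma adjoin_props:
  shows "sub_field (adjoin k r)" "k \<subseteq> adjoin k r" "r \<in> adjoin k r"
    "sub_field F \<Longrightarrow> k \<subseteq> F \<Longrightarrow> r \<in> F \<Longrightarrow> adjoin k r \<subseteq> F"
proof -
  show "sub_field (adjoin k r)" unfolding adjoin_def by (rule sub_field_Inter) simp
  show "k \<subseteq> adjoin k r" unfolding adjoin_def by (rule Inter_greatest) simp
  show "r \<in> adjoin k r" unfolding adjoin_def by (rule InterI) simp
  show "sub_field F \<Longrightarrow> k \<subseteq> F \<Longrightarrow> r \<in> F \<Longrightarrow> adjoin k r \<subseteq> F"
    unfolding adjoin_def by (rule Inter_lower) simp
qed

context setup6 begin

lemma sp_iff: "same_parity f \<delta> L L' \<longleftrightarrow>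
   (\<exists>e e'. is_sqrt_mod f \<delta> e \<and> is_sqrt_mod f \<delta> e' \<and> L = line_of f e \<and> L' = line_of f e' \<and> P e' = P e)"
proof
  assume "same_parity f \<delta> L L'"
  then obtain e e' where h: "is_sqrt_mod f \<delta> e" "is_sqrt_mod f \<delta> e'" "L = line_of f e" "L' = line_of f e'"
     "even (card {\<theta>. poly f \<theta> = 0 \<and> poly e' \<theta> / poly e \<theta> = -1})"
    unfolding same_parity_def by (elim exE conjE)
  then show "\<exists>e e'. is_sqrt_mod f \<delta> e \<and> is_sqrt_mod f \<delta> e' \<and> L = line_of f e \<and> L' = line_of f e' \<and> P e' = P e"
    using par[OF h(1) h(2)] by (intro exI[of _ e] exI[of _ e']) simp
next
  assume "\<exists>e e'. is_sqrt_mod f \<delta> e \<and> is_sqrt_mod f \<delta> e' \<and> L = line_of f e \<and> L' = line_of f e' \<and> P e' = P e"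
  then obtain e e' where h: "is_sqrt_mod f \<delta> e" "is_sqrt_mod f \<delta> e'" "L = line_of f e" "L' = line_of f e'" "P e' = P e"
    by (elim exE conjE)
  then show "same_parity f \<delta> L L'" unfolding same_parity_def
    using par[OF h(1) h(2)] by (intro exI[of _ e] exI[of _ e']) simp
qed

lemma sp_intro: "is_sqrt_mod f \<delta> e \<Longrightarrow> is_sqrt_mod f \<delta> e' \<Longrightarrow> P e' = P e \<Longrightarrow>
   same_parity f \<delta> (line_of f e) (line_of f e')"
  unfolding sp_iff by (rule exI[of _ e], rule exI[of _ e']) simp

lemma main:
  assumes alg: "\<forall>x. algebraic_over k x" and Mmax: "max_same_parity f \<delta> M"
    and rr: "r * r = norm_A f \<delta>"
  shows "is_field_of_def k M (adjoin k r)"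
proof -
  have PM1: "M \<subseteq> lines f \<delta>" using Mmax unfolding max_same_parity_def Let_def by (elim conjE)
  have PM2all: "\<forall>L\<in>M. \<forall>L'\<in>M. same_parity f \<delta> L L'"
    using Mmax unfolding max_same_parity_def Let_def by (elim conjE)
  have PM2: "same_parity f \<delta> L L'" if "L \<in> M" "L' \<in> M" for L L'
    using bspec[OF bspec[OF PM2all that(1)] that(2)] .
  have maxM: "S = M" if "S \<subseteq> lines f \<delta>" "\<forall>L\<in>S. \<forall>L'\<in>S. same_parity f \<delta> L L'" "M \<subseteq> S" for S
  proof -
    have "\<forall>S. (S \<subseteq> lines f \<delta> \<and> (\<forall>L\<in>S. \<forall>L'\<in>S. same_parity f \<delta> L L')) \<and> M \<subseteq> S \<longrightarrow> S = M"
      using Mmax unfolding max_same_parity_def Let_def by (elim conjE)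
    then show ?thesis using that by simp
  qed
  have inlines: "line_of f e \<in> lines f \<delta>" if "is_sqrt_mod f \<delta> e" for e
    unfolding lines_def using that by (intro CollectI exI[of _ e]) simp
  have Mne: "M \<noteq> {}"
  proof
    assume M0: "M = {}"
    obtain e0 where e0: "is_sqrt_mod f \<delta> e0" using sqrt_ex by (elim exE)
    define S where "S = {line_of f e0}"
    have 1: "S \<subseteq> lines f \<delta>" unfolding S_def using inlines[OF e0] by simp
    have 2: "\<forall>L\<in>S. \<forall>L'\<in>S. same_parity f \<delta> L L'" unfolding S_def using sp_intro[OF e0 e0] by simp
    have "S = M" using maxM[OF 1 2] M0 by simp
    then show False using M0 S_def by simp
  qed
  then obtain L0 where L0: "L0 \<in> M" by auto
  have "L0 \<in> lines f \<delta>" using PM1 L0 by (rule subsetD)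
  then obtain e0 where e0: "is_sqrt_mod f \<delta> e0" "L0 = line_of f e0" unfolding lines_def by auto
  define c where "c = P e0"
  define C where "C = {line_of f e | e. is_sqrt_mod f \<delta> e \<and> P e = c}"
  have inC: "line_of f e \<in> C" if "is_sqrt_mod f \<delta> e" "P e = c" for e
    unfolding C_def using that by (intro CollectI exI[of _ e]) simp
  have fromC: "\<exists>e. is_sqrt_mod f \<delta> e \<and> P e = c \<and> L = line_of f e" if "L \<in> C" for L
    using that unfolding C_def by auto
  have MC: "M \<subseteq> C"
  proof
    fix L assume L: "L \<in> M"
    have "same_parity f \<delta> L0 L" using PM2[OF L0 L] .
    then obtain e e' where ee: "is_sqrt_mod f \<delta> e" "is_sqrt_mod f \<delta> e'" "L0 = line_of f e" "L = line_of f e'" "P e' = P e"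
      unfolding sp_iff by auto
    have "P e = P e0" using line_eq[OF ee(1) e0(1)] ee(3) e0(2) by simp
    then have "line_of f e' \<in> C" using inC[OF ee(2)] ee(5) unfolding c_def by simp
    then show "L \<in> C" using ee(4) by simp
  qed
  have C1: "C \<subseteq> lines f \<delta>"
  proof
    fix L assume "L \<in> C"
    then obtain e where "is_sqrt_mod f \<delta> e" "L = line_of f e" using fromC by blast
    then show "L \<in> lines f \<delta>" using inlines by simp
  qed
  have C2: "\<forall>L\<in>C. \<forall>L'\<in>C. same_parity f \<delta> L L'"
  proof (intro ballI)
    fix L L' assume "L \<in> C" "L' \<in> C"
    then obtain e e' where "is_sqrt_mod f \<delta> e" "P e = c" "L = line_of f e"
        "is_sqrt_mod f \<delta> e'" "P e' = c" "L' = line_of f e'" using fromC by meson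
    then show "same_parity f \<delta> L L'" using sp_intro by simp
  qed
  have CM: "C = M" using maxM[OF C1 C2 MC] .
  have cnz: "c \<noteq> 0" unfolding c_def using P_nz[OF e0(1)] .
  have "c * c = r * r" unfolding c_def using P_sq[OF e0(1)] rr by simp
  then have "(c - r) * (c + r) = 0" by (simp add: algebra_simps)
  then have "c - r = 0 \<or> c + r = 0" by simp
  then have cr: "c = r \<or> c = - r" by (auto simp: add_eq_0_iff2)
  have neg: "\<sigma> c = - c" if "field_aut \<sigma>" "\<sigma> r = - r" for \<sigma>
  proof -
    have u: "\<sigma> (- x) = - \<sigma> x" for x using phom_uminus[OF sub_field_UNIV faut_phom[OF that(1)]] by simp
    from cr show ?thesis
    proof
      assume "c = r" then show ?thesis using that(2) by simp
    next
      assume "c = - r" then show ?thesis using that(2) u[of r] by simp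
    qed
  qed
  have fixc: "\<sigma> c = c" if "field_aut \<sigma>" "\<sigma> r = r" for \<sigma>
  proof -
    have u: "\<sigma> (- x) = - \<sigma> x" for x using phom_uminus[OF sub_field_UNIV faut_phom[OF that(1)]] by simp
    from cr show ?thesis
    proof
      assume "c = r" then show ?thesis using that(2) by simp
    next
      assume "c = - r" then show ?thesis using that(2) u[of r] by simp
    qed
  qed
  have part1: "act_lines \<sigma> M = M" if sG: "\<sigma> \<in> Gal (adjoin k r)" for \<sigma>
  proof -
    have fa: "field_aut \<sigma>" and fx: "\<forall>x\<in>adjoin k r. \<sigma> x = x" using sG unfolding Gal_def by auto
    have fixk: "\<forall>x\<in>k. \<sigma> x = x" using fx adjoin_props(2) by blast
    have sr: "\<sigma> r = r" using fx adjoin_props(3) by blast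
    have sc: "\<sigma> c = c" using fixc[OF fa sr] .
    have fa': "field_aut (inv \<sigma>)" using faut_inv[OF fa] .
    have fixk': "\<forall>x\<in>k. inv \<sigma> x = x" using faut_inv_fix[OF fa] fixk by blast
    have sc': "inv \<sigma> c = c" using faut_inv_fix[OF fa sc] .
    have "act_lines \<sigma> C = C"
    proof
      show "act_lines \<sigma> C \<subseteq> C"
      proof
        fix L assume "L \<in> act_lines \<sigma> C"
        then obtain L1 where L1: "L1 \<in> C" "L = act_line \<sigma> L1" unfolding act_lines_def by (elim imageE)
        obtain e where e: "is_sqrt_mod f \<delta> e" "P e = c" "L1 = line_of f e" using fromC[OF L1(1)] by blast
        have "L = line_of f (map_poly \<sigma> e)" using faut_line[OF fa fixk e(1)] e(3) L1(2) by simp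
        moreover have "is_sqrt_mod f \<delta> (map_poly \<sigma> e)" using t_sqrt[OF fa fixk e(1)] .
        moreover have "P (map_poly \<sigma> e) = c" using t_P[OF fa fixk] e(2) sc by simp
        ultimately show "L \<in> C" using inC by simp
      qed
      show "C \<subseteq> act_lines \<sigma> C"
      proof
        fix L assume "L \<in> C"
        then obtain e where e: "is_sqrt_mod f \<delta> e" "P e = c" "L = line_of f e" using fromC by blast
        define e1 where "e1 = map_poly (inv \<sigma>) e"
        have sq1: "is_sqrt_mod f \<delta> e1" unfolding e1_def using t_sqrt[OF fa' fixk' e(1)] .
        have P1: "P e1 = c" unfolding e1_def using t_P[OF fa' fixk'] e(2) sc' by simp
        have "act_line \<sigma> (line_of f e1) = line_of f (map_poly \<sigma> e1)" using faut_line[OF fa fixk sq1] .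
        also have "map_poly \<sigma> e1 = e" unfolding e1_def using faut_map_inv(1)[OF fa] .
        finally have "L = act_line \<sigma> (line_of f e1)" using e(3) by simp
        moreover have "line_of f e1 \<in> C" using inC[OF sq1 P1] .
        ultimately show "L \<in> act_lines \<sigma> C" unfolding act_lines_def by (rule image_eqI)
      qed
    qed
    then show "act_lines \<sigma> M = M" using CM by simp
  qed
  have part2: "adjoin k r \<subseteq> k'"
    if k': "sub_field k'" "k \<subseteq> k'" "\<forall>\<sigma>\<in>Gal k'. act_lines \<sigma> M = M" for k'
  proof -
    have "r \<in> k'"
    proof (rule ccontr)
      assume rk: "r \<notin> k'"
      have Nk: "norm_A f \<delta> \<in> k"
        using norm_in_k[OF ac sk sqf] fk dk unfolding norm_A_def by (simp add: PF_iff)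
      then have NK: "r * r \<in> k'" using rr k'(2) by auto
      obtain \<sigma> where \<sigma>: "field_aut \<sigma>" "\<forall>x\<in>k'. \<sigma> x = x" "\<sigma> r = - r"
        using exists_aut[OF ac alg k'(2) k'(1) rk NK] by (elim exE conjE)
      have fixk: "\<forall>x\<in>k. \<sigma> x = x" using \<sigma>(2) k'(2) by blast
      have "\<sigma> \<in> Gal k'" unfolding Gal_def using \<sigma> by simp
      then have "act_lines \<sigma> M = M" using k'(3) by (rule bspec[rotated])
      then have "L0 \<in> act_lines \<sigma> C" using L0 CM by simp
      then obtain L1 where L1: "L1 \<in> C" "L0 = act_line \<sigma> L1" unfolding act_lines_def by (elim imageE)
      obtain e where e: "is_sqrt_mod f \<delta> e" "P e = c" "L1 = line_of f e" using fromC[OF L1(1)] by blast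
      have L0e: "L0 = line_of f (map_poly \<sigma> e)" using faut_line[OF \<sigma>(1) fixk e(1)] e(3) L1(2) by simp
      have sq: "is_sqrt_mod f \<delta> (map_poly \<sigma> e)" using t_sqrt[OF \<sigma>(1) fixk e(1)] .
      have "P (map_poly \<sigma> e) = - c" using t_P[OF \<sigma>(1) fixk] e(2) neg[OF \<sigma>(1) \<sigma>(3)] by simp
      moreover have "P e0 = P (map_poly \<sigma> e)" using line_eq[OF e0(1) sq] e0(2) L0e by simp
      ultimately have "c = - c" unfolding c_def by simp
      then have "2 * c = 0" by simp
      then show False using two cnz by simp
    qed
    then show ?thesis using adjoin_props(4)[OF k'(1) k'(2)] by simp
  qed
  show ?thesis unfolding is_field_of_def_def
  proof (intro conjI ballI allI impI)
    show "sub_field (adjoin k r)" by (rule adjoin_props(1))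
    show "k \<subseteq> adjoin k r" by (rule adjoin_props(2))
    show "act_lines \<sigma> M = M" if "\<sigma> \<in> Gal (adjoin k r)" for \<sigma> using part1[OF that] .
    show "adjoin k r \<subseteq> k'" if "sub_field k' \<and> k \<subseteq> k' \<and> (\<forall>\<sigma>\<in>Gal k'. act_lines \<sigma> M = M)" for k'
      using part2 that by blast
  qed
qed

end

theorem lemma2p39:
  fixes k :: "'a::field set" and f \<delta> :: "'a poly" and M :: "'a poly set set" and r :: 'a
  assumes "is_alg_closure_of k"
    and "(2::'a) \<noteq> 0"
    and "\<forall>i. coeff f i \<in> k" and "degree f = 6" and "rsquarefree f"
    and "\<forall>i. coeff \<delta> i \<in> k"
    and "\<exists>u. (\<forall>i. coeff u i \<in> k) \<and> (\<delta> * u) mod f = 1"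
    and "max_same_parity f \<delta> M"
    and "r * r = norm_A f \<delta>"
  shows "is_field_of_def k M (adjoin k r)"
proof -
  have ac: "alg_closed TYPE('a)" and sk: "sub_field k" and alg: "\<forall>x. algebraic_over k x"
    using assms(1) unfolding is_alg_closure_of_def by auto
  interpret setup6 k f \<delta>
    by (unfold_locales) (use assms ac sk in auto)
  show ?thesis using main[OF alg assms(8) assms(9)] .
qed


end
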